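(* The map sending a smooth extremal assignment $Z$ of order $n$ to the hypergraph on vertex set $[n]$ with edge set $\{[n]\setminus B: B \text{ a maximal element of } \mathcal{C}_Z\}$ is a bijection from the set of smooth extremal assignments of order $n$ onto the set of simple intersecting families of order $n$, rank $\le n-2$ and antirank $\ge 2$. Here $\mathcal{C}_Z=\{\ell(v): G\in S_2(n),\ v\in Z(G)\}$.
   Context: $[n]=\{1,\dots,n\}$. A stable $n$-labeled tree is a finite tree with $n$ leaves labeled bijectively by $[n]$, all internal vertices of degree $\ge 3$; $V(G)$ its internal vertices; $S(n)$ the set of such trees up to label-preserving isomorphism and $S_2(n)$ those with exactly 2 internal vertices. $\ell(v)$ is the set of labels of leaves adjacent to $v$. $G\rightsquigarrow G'$: $G'$ obtained by collapsing connected sets of internal vertices, inducing surjection $\pi:V(G)\to V(G')$; $v\rightsquigarrow v'$ means $\pi(v)=v'$. An extremal assignment of order $n$: rule $Z(G)\subset V(G)$ for $G\in S(n)$ with (a) $Z(G)\ne V(G)$, (b) if $G\rightsquigarrow G'$ and $\pi^{-1}(v')=\{v_1,\dots,v_k\}$ then $v'\in Z(G')\iff v_1,\dots,v_k\in Z(G)$. $Z$ is smooth if for every $G$ and $v\in Z(G)$ there exist $G'\in S_2(n)$, $v'\in Z(G')$ with $G\rightsquigarrow G'$, $v\rightsquigarrow v'$. A simple intersecting family of order $n$, rank $\le n-2$, antirank $\ge2$ is a collection $\{A_i\}$ of subsets of $[n]$ with $2\le|A_i|\le n-2$ for all $i$, $A_i\subset A_j\Rightarrow i=j$, and $A_i\cap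 A_j\ne\emptyset$ for all $i,j$. *)

theory Defs
  imports Main
begin

text \<open>Internal vertices are natural numbers
  (set iv), edges between internal vertices are two-element sets (ied), and the
  leaf labelled i (for i in {1..n}) is attached to the internal vertex lf i.
  Since leaves are pendant, the whole graph is a tree iff the internal graph is.\<close>

record stree =
  iv  :: "nat set"
  ied :: "nat set set"
  lf  :: "nat \<Rightarrow> nat"

definition conn_on :: "nat set set \<Rightarrow> nat set \<Rightarrow> bool" where
  "conn_on E S \<longleftrightarrow>
     (\<forall>u\<in>S. \<forall>w\<in>S. (\<lambda>a b. a \<in> S \<and> b \<in> S \<and> {a, b} \<in> E)\<^sup>*\<^sup>* u w)"

definition has_cycle :: "nat set set \<Rightarrow> nat set \<Rightarrow> bool" where
  "has_cycle E V \<longleftrightarrow>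
     (\<exists>cs. 3 \<le> length cs \<and> distinct cs \<and> set cs \<subseteq> V \<and>
           (\<forall>i < length cs. {cs ! i, cs ! ((i + 1) mod length cs)} \<in> E))"

definition ell :: "nat \<Rightarrow> stree \<Rightarrow> nat \<Rightarrow> nat set" where
  "ell n G v = {i \<in> {1..n}. lf G i = v}"

definition sdeg :: "nat \<Rightarrow> stree \<Rightarrow> nat \<Rightarrow> nat" where
  "sdeg n G v = card {u \<in> iv G. {u, v} \<in> ied G} + card (ell n G v)"

definition stable_tree :: "nat \<Rightarrow> stree \<Rightarrow> bool" where
  "stable_tree n G \<longleftrightarrow>
     finite (iv G) \<and> iv G \<noteq> {} \<and>
     ied G \<subseteq> {e. \<exists>u v. e = {u, v} \<and> u \<noteq> v \<and> u \<in> iv G \<and> v \<in> iv G} \<and>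
     conn_on (ied G) (iv G) \<and> \<not> has_cycle (ied G) (iv G) \<and>
     (\<forall>i\<in>{1..n}. lf G i \<in> iv G) \<and>
     (\<forall>v\<in>iv G. 3 \<le> sdeg n G v)"

definition collapse :: "nat \<Rightarrow> stree \<Rightarrow> stree \<Rightarrow> (nat \<Rightarrow> nat) \<Rightarrow> bool" where
  "collapse n G G' \<pi> \<longleftrightarrow>
     stable_tree n G \<and> stable_tree n G' \<and>
     \<pi> ` iv G = iv G' \<and>
     (\<forall>v'\<in>iv G'. conn_on (ied G) {v \<in> iv G. \<pi> v = v'}) \<and>
     ied G' = {{\<pi> u, \<pi> v} | u v. {u, v} \<in> ied G \<and> \<pi> u \<noteq> \<pi> v} \<and>
     (\<forall>i\<in>{1..n}. lf G' i = \<pi> (lf G i))"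

definition extremal :: "nat \<Rightarrow> (stree \<Rightarrow> nat set) \<Rightarrow> bool" where
  "extremal n Z \<longleftrightarrow>
     (\<forall>G. stable_tree n G \<longrightarrow> Z G \<subseteq> iv G \<and> Z G \<noteq> iv G) \<and>
     (\<forall>G G' \<pi>. collapse n G G' \<pi> \<longrightarrow>
        (\<forall>v'\<in>iv G'. v' \<in> Z G' \<longleftrightarrow> {v \<in> iv G. \<pi> v = v'} \<subseteq> Z G))"

definition smooth :: "nat \<Rightarrow> (stree \<Rightarrow> nat set) \<Rightarrow> bool" where
  "smooth n Z \<longleftrightarrow>
     (\<forall>G. stable_tree n G \<longrightarrow>
        (\<forall>v\<in>Z G. \<exists>G' \<pi>. card (iv G') = 2 \<and> collapse n G G' \<pi> \<and> \<pi> v \<in> Z G'))"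

text \<open>Set of smooth extremal assignments of order n (extensional: value {} off S(n)).\<close>
definition smooth_extremal_assignments :: "nat \<Rightarrow> (stree \<Rightarrow> nat set) set" where
  "smooth_extremal_assignments n =
     {Z. extremal n Z \<and> smooth n Z \<and> (\<forall>G. \<not> stable_tree n G \<longrightarrow> Z G = {})}"

definition CZ :: "nat \<Rightarrow> (stree \<Rightarrow> nat set) \<Rightarrow> nat set set" where
  "CZ n Z = {ell n G v | G v. stable_tree n G \<and> card (iv G) = 2 \<and> v \<in> Z G}"

definition hyp_of :: "nat \<Rightarrow> (stree \<Rightarrow> nat set) \<Rightarrow> nat set set" where
  "hyp_of n Z = {{1..n} - B | B. B \<in> CZ n Z \<and> (\<forall>B'\<in>CZ n Z. \<not> B \<subset> B')}"

definition simple_intersecting_families :: "nat \<Rightarrow> nat set set set" where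
  "simple_intersecting_families n =
     {F. (\<forall>A\<in>F. A \<subseteq> {1..n} \<and> 2 \<le> card A \<and> card A \<le> n - 2) \<and>
         (\<forall>A\<in>F. \<forall>B\<in>F. A \<subseteq> B \<longrightarrow> A = B) \<and>
         (\<forall>A\<in>F. \<forall>B\<in>F. A \<inter> B \<noteq> {})}"

end

theory Submission
  imports Defs
begin


definition rr :: "nat set set \<Rightarrow> nat set \<Rightarrow> nat \<Rightarrow> nat \<Rightarrow> bool" where
  "rr E S a b \<longleftrightarrow> a \<in> S \<and> b \<in> S \<and> {a, b} \<in> E"

lemma conn_on_rr: "conn_on E S \<longleftrightarrow> (\<forall>u\<in>S. \<forall>w\<in>S. (rr E S)\<^sup>*\<^sup>* u w)"
  unfolding conn_on_def rr_def[abs_def] by simp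

lemma rr_sym: "rr E S a b \<Longrightarrow> rr E S b a"
  unfolding rr_def by (simp add: insert_commute)

lemma rtr_sym: "(rr E S)\<^sup>*\<^sup>* a b \<Longrightarrow> (rr E S)\<^sup>*\<^sup>* b a"
proof (induction rule: rtranclp_induct)
  case base then show ?case by simp
next
  case (step y z)
  then show ?case using rr_sym converse_rtranclp_into_rtranclp by metis
qed

lemma rtr_mono: "(rr E S)\<^sup>*\<^sup>* a b \<Longrightarrow> (\<And>x y. rr E S x y \<Longrightarrow> rr E' S' x y) \<Longrightarrow> (rr E' S')\<^sup>*\<^sup>* a b"
  using mono_rtranclp by metis

lemma rtr_in: "(rr E S)\<^sup>*\<^sup>* a b \<Longrightarrow> a \<noteq> b \<Longrightarrow> a \<in> S \<and> b \<in> S"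
proof (induction rule: rtranclp_induct)
  case base then show ?case by simp
next
  case (step y z)
  then show ?case unfolding rr_def by (cases "a = y") auto
qed

lemma distinct_path:
  assumes "P\<^sup>*\<^sup>* x y"
  shows "\<exists>xs. xs \<noteq> [] \<and> hd xs = x \<and> last xs = y \<and> distinct xs \<and> successively P xs"
  using assms
proof (induction rule: rtranclp_induct)
  case base
  then show ?case by (intro exI[of _ "[x]"]) simp
next
  case (step y z)
  then obtain xs where xs: "xs \<noteq> []" "hd xs = x" "last xs = y" "distinct xs" "successively P xs" by blast
  show ?case
  proof (cases "z \<in> set xs")
    case True
    then obtain ys zs where yz: "xs = ys @ z # zs" by (meson split_list)
    show ?thesis
    proof (intro exI[of _ "ys @ [z]"] conjI)
      show "hd (ys @ [z]) = x" using xs yz by (cases ys) auto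
      show "distinct (ys @ [z])" using xs yz by auto
      show "successively P (ys @ [z])" using xs(5) yz
        by (simp add: successively_append_iff)
    qed auto
  next
    case False
    show ?thesis
    proof (intro exI[of _ "xs @ [z]"] conjI)
      show "hd (xs @ [z]) = x" using xs by simp
      show "distinct (xs @ [z])" using xs False by auto
      show "successively P (xs @ [z])" using xs step(2)
        by (simp add: successively_append_iff)
    qed auto
  qed
qed

definition rch :: "stree \<Rightarrow> nat set \<Rightarrow> nat \<Rightarrow> nat \<Rightarrow> bool" where
  "rch G e = (rr (ied G - {e}) (iv G))\<^sup>*\<^sup>*"

definition side :: "stree \<Rightarrow> nat set \<Rightarrow> nat \<Rightarrow> nat set" where
  "side G e x = {y. rch G e x y}"

definition LL :: "nat \<Rightarrow> stree \<Rightarrow> nat set \<Rightarrow> nat set" where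
  "LL n G S = {i \<in> {1..n}. lf G i \<in> S}"

lemma stable_edge:
  assumes "stable_tree n G" "e \<in> ied G"
  shows "\<exists>a b. e = {a, b} \<and> a \<noteq> b \<and> a \<in> iv G \<and> b \<in> iv G"
  using assms unfolding stable_tree_def by blast

lemma bridge:
  assumes st: "stable_tree n G" and e: "{a, b} \<in> ied G" and ab: "a \<noteq> b"
  shows "\<not> rch G {a, b} a b"
proof
  assume "rch G {a, b} a b"
  then obtain xs where xs: "xs \<noteq> []" "hd xs = a" "last xs = b" "distinct xs"
    "successively (rr (ied G - {{a, b}}) (iv G)) xs"
    unfolding rch_def using distinct_path by metis
  have len2: "length xs \<ge> 2"
  proof (rule ccontr)
    assume "\<not> length xs \<ge> 2"
    moreover have "length xs \<noteq> 0" using xs(1) by simp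
    ultimately have "length xs = 1" by linarith
    then obtain z where "xs = [z]" by (metis length_0_conv length_Suc_conv One_nat_def)
    with xs ab show False by simp
  qed
  have len3: "length xs \<ge> 3"
  proof (rule ccontr)
    assume "\<not> length xs \<ge> 3"
    with len2 have "length xs = 2" by simp
    then obtain u v where "xs = [u, v]"
      by (cases xs; cases "tl xs") auto
    with xs show False unfolding rr_def by simp
  qed
  have steps: "\<And>i. Suc i < length xs \<Longrightarrow> rr (ied G - {{a, b}}) (iv G) (xs ! i) (xs ! Suc i)"
    using xs(5) successively_nth by blast
  have "has_cycle (ied G) (iv G)"
    unfolding has_cycle_def
  proof (intro exI[of _ xs] conjI allI impI)
    show "3 \<le> length xs" by fact
    show "distinct xs" by fact
    show "set xs \<subseteq> iv G"
    proof
      fix z assume "z \<in> set xs"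
      then obtain i where i: "i < length xs" "z = xs ! i" by (auto simp: in_set_conv_nth)
      show "z \<in> iv G"
      proof (cases "Suc i < length xs")
        case True then show ?thesis using steps[OF True] i unfolding rr_def by simp
      next
        case False
        then have "i = Suc (length xs - 2)" using i len3 by simp
        then have "Suc (length xs - 2) < length xs" "xs ! Suc (length xs - 2) = z" using i len3 by auto
        then show ?thesis using steps[of "length xs - 2"] unfolding rr_def by simp
      qed
    qed
    fix i assume i: "i < length xs"
    show "{xs ! i, xs ! ((i + 1) mod length xs)} \<in> ied G"
    proof (cases "Suc i < length xs")
      case True then show ?thesis using steps[OF True] unfolding rr_def by simp
    next
      case False
      then have "i = length xs - 1" using i by simp
      then have "xs ! i = b" "(i + 1) mod length xs = 0" using xs(1,3) i
        by (auto simp: last_conv_nth)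
      moreover have "xs ! 0 = a" using xs(1,2) by (simp add: hd_conv_nth)
      ultimately show ?thesis using e by (simp add: insert_commute)
    qed
  qed
  with st show False unfolding stable_tree_def by simp
qed

lemma rch_refl[simp]: "rch G e x x"
  unfolding rch_def by simp

lemma rch_sym: "rch G e x y \<Longrightarrow> rch G e y x"
  unfolding rch_def using rtr_sym by metis

lemma rch_trans: "rch G e x y \<Longrightarrow> rch G e y z \<Longrightarrow> rch G e x z"
  unfolding rch_def by simp

lemma rch_step: "x \<in> iv G \<Longrightarrow> y \<in> iv G \<Longrightarrow> {x, y} \<in> ied G \<Longrightarrow> {x, y} \<noteq> e \<Longrightarrow> rch G e x y"
  unfolding rch_def rr_def by (simp add: r_into_rtranclp)

lemma rch_in: "rch G e x y \<Longrightarrow> x \<in> iv G \<Longrightarrow> y \<in> iv G"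
  unfolding rch_def using rtr_in by metis

lemma conn_split_gen:
  assumes "(rr E V)\<^sup>*\<^sup>* x y" "E = ied G" "V = iv G"
  shows "rch G {a, b} x y \<or> (rch G {a, b} x a \<and> rch G {a, b} b y) \<or> (rch G {a, b} x b \<and> rch G {a, b} a y)"
  using assms(1)
proof (induction rule: rtranclp_induct)
  case base then show ?case by simp
next
  case (step y z)
  have yz: "y \<in> iv G" "z \<in> iv G" "{y, z} \<in> ied G" using step(2) assms unfolding rr_def by auto
  show ?case
  proof (cases "{y, z} = {a, b}")
    case False
    then have "rch G {a, b} y z" using yz rch_step by metis
    then show ?thesis using step(3) rch_trans by metis
  next
    case True
    then have "(y = a \<and> z = b) \<or> (y = b \<and> z = a)" by (auto simp: doubleton_eq_iff)
    then show ?thesis using step(3) rch_trans by (metis rch_refl)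
  qed
qed

lemma side_split:
  assumes st: "stable_tree n G" and x: "x \<in> iv G" and ab: "a \<in> iv G"
  shows "rch G {a, b} x a \<or> rch G {a, b} x b"
proof -
  have "(rr (ied G) (iv G))\<^sup>*\<^sup>* x a" using st x ab unfolding stable_tree_def conn_on_rr by blast
  from conn_split_gen[OF this refl refl, where a=a and b=b] show ?thesis by (metis rch_refl rch_trans)
qed

lemma rch_edge_other:
  assumes st: "stable_tree n G" and f: "{c, d} \<in> ied G" and ne: "{c, d} \<noteq> e"
  shows "rch G e c d"
proof -
  have "c \<in> iv G" "d \<in> iv G" using stable_edge[OF st f] by (auto simp: doubleton_eq_iff)
  then show ?thesis using rch_step f ne by metis
qed

lemma avoid:
  assumes "rch G e x y" "\<forall>z\<in>f. \<not> rch G e y z"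
  shows "rch G f x y"
proof -
  have "(rr (ied G - {e}) (iv G))\<^sup>*\<^sup>* x y" using assms(1) unfolding rch_def by simp
  then show ?thesis
  proof (induction rule: converse_rtranclp_induct)
    case base then show ?case by simp
  next
    case (step u v)
    have "rch G e v y" using step(2) unfolding rch_def by simp
    then have "rch G e u y" using step(1) unfolding rch_def by (simp add: converse_rtranclp_into_rtranclp)
    have "{u, v} \<noteq> f"
    proof
      assume "{u, v} = f"
      then have "v \<in> f" by auto
      with assms(2) \<open>rch G e v y\<close> show False using rch_sym by metis
    qed
    then have "rch G f u v" using step(1) rch_step unfolding rr_def by auto
    then show ?case using step(3) rch_trans by metis
  qed
qed

lemma side_eq: "rch G e x y \<Longrightarrow> side G e x = side G e y"
  unfolding side_def using rch_sym rch_trans by blast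

lemma side_self: "x \<in> side G e x"
  unfolding side_def by simp

lemma side_sub: "x \<in> iv G \<Longrightarrow> side G e x \<subseteq> iv G"
  unfolding side_def using rch_in by blast

lemma sides_disj:
  assumes st: "stable_tree n G" and e: "{a, b} \<in> ied G" and ab: "a \<noteq> b"
  shows "side G {a, b} a \<inter> side G {a, b} b = {}"
  using bridge[OF st e ab] unfolding side_def using rch_sym rch_trans by blast

lemma sides_cover:
  assumes st: "stable_tree n G" and e: "{a, b} \<in> ied G"
  shows "iv G = side G {a, b} a \<union> side G {a, b} b"
proof -
  have ab: "a \<in> iv G" "b \<in> iv G" using stable_edge[OF st e] by (auto simp: doubleton_eq_iff)
  show ?thesis
  proof
    show "iv G \<subseteq> side G {a, b} a \<union> side G {a, b} b"
      using side_split[OF st _ ab(1)] unfolding side_def using rch_sym by blast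
    show "side G {a, b} a \<union> side G {a, b} b \<subseteq> iv G" using side_sub ab by blast
  qed
qed

lemma edge_one_side:
  assumes st: "stable_tree n G" and e: "{a, b} \<in> ied G" and f: "{c, d} \<in> ied G"
    and ne: "{c, d} \<noteq> {a, b}"
  shows "(c \<in> side G {a, b} a \<and> d \<in> side G {a, b} a) \<or> (c \<in> side G {a, b} b \<and> d \<in> side G {a, b} b)"
proof -
  have "c \<in> iv G" using stable_edge[OF st f] by (auto simp: doubleton_eq_iff)
  then have "c \<in> side G {a, b} a \<or> c \<in> side G {a, b} b" using sides_cover[OF st e] by blast
  moreover have "rch G {a, b} c d" using rch_edge_other[OF st f ne] .
  ultimately show ?thesis unfolding side_def using rch_trans by blast
qed

lemma nest:
  assumes st: "stable_tree n G" and e: "{a, b} \<in> ied G" and ab: "a \<noteq> b"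
    and f: "f \<in> ied G" and fe: "f \<noteq> {a, b}" and fsub: "f \<subseteq> side G {a, b} a"
  shows "side G {a, b} b \<subseteq> side G f a"
proof
  fix x assume "x \<in> side G {a, b} b"
  then have "rch G {a, b} x b" unfolding side_def using rch_sym by blast
  moreover have "\<forall>z\<in>f. \<not> rch G {a, b} b z"
    using fsub sides_disj[OF st e ab] unfolding side_def by blast
  ultimately have "rch G f x b" using avoid by metis
  moreover have "rch G f a b"
  proof -
    have "a \<in> iv G" "b \<in> iv G" using stable_edge[OF st e] by (auto simp: doubleton_eq_iff)
    then show ?thesis using rch_step e fe by metis
  qed
  ultimately show "x \<in> side G f a" unfolding side_def using rch_sym rch_trans by blast
qed

definition eside :: "stree \<Rightarrow> nat set \<Rightarrow> bool" where
  "eside G S \<longleftrightarrow> (\<exists>e\<in>ied G. \<exists>x\<in>e. S = side G e x)"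

lemma eside_obtain:
  assumes st: "stable_tree n G" and "eside G S"
  obtains a b where "{a, b} \<in> ied G" "a \<noteq> b" "a \<in> iv G" "b \<in> iv G" "S = side G {a, b} a"
proof -
  obtain e x where ex: "e \<in> ied G" "x \<in> e" "S = side G e x" using assms(2) unfolding eside_def by blast
  obtain p q where pq: "e = {p, q}" "p \<noteq> q" "p \<in> iv G" "q \<in> iv G" using stable_edge[OF st ex(1)] by blast
  show ?thesis
  proof (cases "x = p")
    case True then show ?thesis using that pq ex by blast
  next
    case False
    then have "x = q" using pq ex by auto
    then show ?thesis using that[of q p] pq ex by (auto simp: insert_commute)
  qed
qed

lemma eside_I: "{a, b} \<in> ied G \<Longrightarrow> eside G (side G {a, b} a)"
  unfolding eside_def by blast

lemma eside_sub: "stable_tree n G \<Longrightarrow> eside G S \<Longrightarrow> S \<subseteq> iv G"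
  by (metis eside_obtain side_sub)

lemma eside_finite: "stable_tree n G \<Longrightarrow> finite {S. eside G S}"
proof -
  assume st: "stable_tree n G"
  have "{S. eside G S} \<subseteq> Pow (iv G)" using eside_sub[OF st] by blast
  moreover have "finite (iv G)" using st unfolding stable_tree_def by simp
  ultimately show ?thesis using finite_subset by blast
qed

lemma leaf_card:
  assumes st: "stable_tree n G" and e: "{a, b} \<in> ied G" and ab: "a \<noteq> b"
  shows "2 \<le> card (LL n G (side G {a, b} a))"
proof -
  define S where "S = side G {a, b} a"
  define X where "X = {U. eside G U \<and> U \<subseteq> S}"
  have "finite X" using eside_finite[OF st] unfolding X_def by (rule rev_finite_subset) blast
  moreover have "S \<in> X" unfolding X_def S_def using eside_I[OF e] by blast
  ultimately obtain U where U: "U \<in> X" "\<forall>T\<in>X. T \<subseteq> U \<longrightarrow> U = T"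
    using finite_has_minimal[of X] by blast
  then have "eside G U" "U \<subseteq> S" unfolding X_def by auto
  then obtain d c where dc: "{d, c} \<in> ied G" "d \<noteq> c" "d \<in> iv G" "c \<in> iv G" "U = side G {d, c} d"
    using eside_obtain[OF st] by metis
  have nb: "{u \<in> iv G. {u, d} \<in> ied G} \<subseteq> {c}"
  proof
    fix u assume u: "u \<in> {u \<in> iv G. {u, d} \<in> ied G}"
    show "u \<in> {c}"
    proof (rule ccontr)
      assume "u \<notin> {c}"
      then have uc: "u \<noteq> c" by simp
      have g: "{d, u} \<in> ied G" using u by (simp add: insert_commute)
      have ud: "u \<noteq> d" using stable_edge[OF st g] by (auto simp: doubleton_eq_iff)
      have gf: "{d, u} \<noteq> {d, c}" using uc ud by (auto simp: doubleton_eq_iff)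
      have "rch G {d, c} d u" using rch_edge_other[OF st g gf] .
      then have gsub: "{d, u} \<subseteq> side G {d, c} d" unfolding side_def by auto
      have n1: "side G {d, c} c \<subseteq> side G {d, u} d"
        using nest[OF st dc(1) dc(2) g gf gsub] .
      have dj0: "side G {d, u} d \<inter> side G {d, u} u = {}"
        using sides_disj[OF st g] ud by metis
      have dj: "side G {d, u} u \<inter> side G {d, u} d = {}"
        using dj0 by blast
      have uV: "u \<in> iv G" using u by simp
      have sub: "side G {d, u} u \<subseteq> U"
      proof
        fix x assume x: "x \<in> side G {d, u} u"
        then have "x \<in> iv G" using side_sub[OF uV] by blast
        then have "x \<in> side G {d, c} d \<or> x \<in> side G {d, c} c" using sides_cover[OF st dc(1)] by blast
        moreover have "x \<notin> side G {d, c} c" using x n1 dj by blast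
        ultimately show "x \<in> U" using dc(5) by blast
      qed
      have dnot: "d \<notin> side G {d, u} u" using dj side_self by blast
      have "side G {d, u} u \<in> X"
        using eside_I[of u d G] g sub \<open>U \<subseteq> S\<close> unfolding X_def by (auto simp: insert_commute)
      then have "U = side G {d, u} u" using U(2) sub by blast
      then show False using dnot dc(5) side_self by blast
    qed
  qed
  have fin: "finite {u \<in> iv G. {u, d} \<in> ied G}" using st unfolding stable_tree_def by simp
  have "card {u \<in> iv G. {u, d} \<in> ied G} \<le> 1"
    using card_mono[OF _ nb] by simp
  moreover have "3 \<le> sdeg n G d" using st dc(3) unfolding stable_tree_def by blast
  ultimately have "2 \<le> card (ell n G d)" unfolding sdeg_def by simp
  moreover have "ell n G d \<subseteq> LL n G S"
    using \<open>U \<subseteq> S\<close> dc(5) side_self unfolding ell_def LL_def by blast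
  moreover have "finite (LL n G S)" unfolding LL_def by simp
  ultimately show ?thesis unfolding S_def using card_mono by (metis le_trans)
qed

definition bad :: "nat \<Rightarrow> nat set set \<Rightarrow> stree \<Rightarrow> nat set \<Rightarrow> bool" where
  "bad n F G S \<longleftrightarrow> eside G S \<and> (\<exists>A\<in>F. A \<inter> LL n G S = {})"

lemma cover_contra:
  assumes st: "stable_tree n G" and inter: "\<forall>A\<in>F. \<forall>B\<in>F. A \<inter> B \<noteq> {}"
    and subs: "\<forall>A\<in>F. A \<subseteq> {1..n}" and S: "bad n F G S" and T: "bad n F G T"
    and cov: "iv G \<subseteq> S \<union> T"
  shows False
proof -
  obtain A1 A2 where A: "A1 \<in> F" "A1 \<inter> LL n G S = {}" "A2 \<in> F" "A2 \<inter> LL n G T = {}"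
    using S T unfolding bad_def by blast
  obtain i where i: "i \<in> A1" "i \<in> A2" using inter A by blast
  then have "i \<in> {1..n}" using subs A by blast
  then have "lf G i \<in> iv G" using st unfolding stable_tree_def by blast
  then have "lf G i \<in> S \<or> lf G i \<in> T" using cov by blast
  then show False using A i \<open>i \<in> {1..n}\<close> unfolding LL_def by blast
qed

lemma cross_gen:
  assumes "(rr (ied G) W)\<^sup>*\<^sup>* w y" "w \<in> side G {a, b} a" "y \<notin> side G {a, b} a"
    and WV: "W \<subseteq> iv G"
  shows "a \<in> W \<and> b \<in> W"
  using assms(1-3)
proof (induction rule: rtranclp_induct)
  case base then show ?case by simp
next
  case (step y z)
  show ?case
  proof (cases "y \<in> side G {a, b} a")
    case False then show ?thesis using step by blast
  next
    case True
    have yz: "y \<in> W" "z \<in> W" "{y, z} \<in> ied G" using step(2) unfolding rr_def by auto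
    have "{y, z} = {a, b}"
    proof (rule ccontr)
      assume ne: "{y, z} \<noteq> {a, b}"
      show False
      proof (cases "y = z")
        case True then show False using step(5) \<open>y \<in> side G {a, b} a\<close> by simp
      next
        case False
        have "y \<in> iv G" "z \<in> iv G" using yz WV by auto
        then have "rch G {a, b} y z" using rch_step yz(3) ne by metis
        then show False using step(5) True unfolding side_def using rch_trans by blast
      qed
    qed
    then show ?thesis using yz by (auto simp: doubleton_eq_iff)
  qed
qed

lemma exit_gen:
  assumes "P\<^sup>*\<^sup>* x y" "x \<in> W" "y \<notin> W"
  shows "\<exists>c d. c \<in> W \<and> d \<notin> W \<and> P c d \<and> (\<lambda>u v. P u v \<and> u \<notin> W \<and> v \<notin> W)\<^sup>*\<^sup>* d y"
  using assms
proof (induction rule: rtranclp_induct)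
  case base then show ?case by simp
next
  case (step y z)
  show ?case
  proof (cases "y \<in> W")
    case True then show ?thesis using step by blast
  next
    case False
    then obtain c d where cd: "c \<in> W" "d \<notin> W" "P c d" "(\<lambda>u v. P u v \<and> u \<notin> W \<and> v \<notin> W)\<^sup>*\<^sup>* d y"
      using step by blast
    have "(\<lambda>u v. P u v \<and> u \<notin> W \<and> v \<notin> W)\<^sup>*\<^sup>* d z"
      using cd(4) step(2) False step(5) by (simp add: rtranclp.rtrancl_into_rtrancl)
    then show ?thesis using cd by blast
  qed
qed

lemma bad_finite: "stable_tree n G \<Longrightarrow> finite {S. bad n F G S}"
  using eside_finite unfolding bad_def by (rule rev_finite_subset) auto

lemma helly1:
  assumes st: "stable_tree n G" and inter: "\<forall>A\<in>F. \<forall>B\<in>F. A \<inter> B \<noteq> {}"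
    and subs: "\<forall>A\<in>F. A \<subseteq> {1..n}"
    and WV: "W \<subseteq> iv G" and Wne: "W \<noteq> {}" and Wc: "conn_on (ied G) W"
    and cov: "\<forall>w\<in>W. \<exists>S. bad n F G S \<and> w \<in> S"
  shows "\<exists>S. bad n F G S \<and> W \<subseteq> S"
proof -
  define X where "X = {S. bad n F G S \<and> S \<inter> W \<noteq> {}}"
  have "finite X" using bad_finite[OF st] unfolding X_def by (rule rev_finite_subset) blast
  moreover have "X \<noteq> {}" using Wne cov unfolding X_def by blast
  ultimately obtain S where S: "S \<in> X" "\<forall>T\<in>X. S \<subseteq> T \<longrightarrow> S = T"
    using finite_has_maximal[of X] by blast
  show ?thesis
  proof (cases "W \<subseteq> S")
    case True then show ?thesis using S unfolding X_def by blast
  next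
    case False
    then obtain w2 where w2: "w2 \<in> W" "w2 \<notin> S" by blast
    obtain w1 where w1: "w1 \<in> W" "w1 \<in> S" using S unfolding X_def by blast
    have Sbad: "bad n F G S" using S unfolding X_def by blast
    then obtain a b where ab: "{a, b} \<in> ied G" "a \<noteq> b" "a \<in> iv G" "b \<in> iv G" "S = side G {a, b} a"
      using eside_obtain[OF st] unfolding bad_def by metis
    have "(rr (ied G) W)\<^sup>*\<^sup>* w1 w2" using Wc w1 w2 unfolding conn_on_rr by blast
    then have abW: "a \<in> W \<and> b \<in> W" using cross_gen[OF _ _ _ WV] w1 w2 ab(5) by blast
    then obtain T where T: "bad n F G T" "b \<in> T" using cov by blast
    then obtain c d where cd: "{c, d} \<in> ied G" "c \<noteq> d" "c \<in> iv G" "d \<in> iv G" "T = side G {c, d} c"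
      using eside_obtain[OF st] unfolding bad_def by metis
    have Tb: "T = side G {c, d} b" using T(2) cd(5) side_eq unfolding side_def by blast
    have bnotS: "b \<notin> S" using sides_disj[OF st ab(1) ab(2)] ab(5) side_self by blast
    have covab: "iv G = side G {a, b} a \<union> side G {a, b} b" using sides_cover[OF st ab(1)] .
    show ?thesis
    proof (cases "{c, d} = {a, b}")
      case True
      then have "T = side G {a, b} b" using Tb by simp
      then have "iv G \<subseteq> S \<union> T" using covab ab(5) by blast
      then show ?thesis using cover_contra[OF st inter subs Sbad T(1)] by blast
    next
      case ne: False
      from edge_one_side[OF st ab(1) cd(1) ne]
      show ?thesis
      proof
        assume inA: "c \<in> side G {a, b} a \<and> d \<in> side G {a, b} a"
        have "side G {a, b} b \<subseteq> side G {c, d} a"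
          using nest[OF st ab(1) ab(2) cd(1) ne] inA by blast
        moreover have "rch G {c, d} a b" using rch_edge_other[OF st ab(1)] ne by metis
        ultimately have "side G {a, b} b \<subseteq> T" using Tb side_eq by metis
        then have "iv G \<subseteq> S \<union> T" using covab ab(5) by blast
        then show ?thesis using cover_contra[OF st inter subs Sbad T(1)] by blast
      next
        assume inB: "c \<in> side G {a, b} b \<and> d \<in> side G {a, b} b"
        have e': "{b, a} \<in> ied G" using ab(1) by (simp add: insert_commute)
        have "side G {b, a} a \<subseteq> side G {c, d} b"
          using nest[OF st e' ab(2)[symmetric] cd(1)] ne inB by (auto simp: insert_commute)
        then have "S \<subseteq> T" using ab(5) Tb by (simp add: insert_commute)
        moreover have "T \<in> X" using T abW unfolding X_def by blast
        ultimately have "S = T" using S(2) by blast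
        then show ?thesis using bnotS T(2) by blast
      qed
    qed
  qed
qed

lemma helly2:
  assumes st: "stable_tree n G"
    and WV: "W \<subseteq> iv G" and Wne: "W \<noteq> {}" and Wc: "conn_on (ied G) W"
    and ex: "\<exists>S. bad n F G S \<and> W \<subseteq> S"
  shows "\<exists>a b. {a, b} \<in> ied G \<and> a \<noteq> b \<and> a \<in> W \<and> b \<notin> W \<and> W \<subseteq> side G {a, b} a
            \<and> bad n F G (side G {a, b} a)"
proof -
  define X where "X = {S. bad n F G S \<and> W \<subseteq> S}"
  have "finite X" using bad_finite[OF st] unfolding X_def by (rule rev_finite_subset) blast
  moreover have "X \<noteq> {}" using ex unfolding X_def by blast
  ultimately obtain S where S: "S \<in> X" "\<forall>T\<in>X. T \<subseteq> S \<longrightarrow> S = T"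
    using finite_has_minimal[of X] by blast
  have Sbad: "bad n F G S" and WS: "W \<subseteq> S" using S unfolding X_def by auto
  then obtain a b where ab: "{a, b} \<in> ied G" "a \<noteq> b" "a \<in> iv G" "b \<in> iv G" "S = side G {a, b} a"
    using eside_obtain[OF st] unfolding bad_def by metis
  have bnotS: "b \<notin> S" using sides_disj[OF st ab(1) ab(2)] ab(5) side_self by blast
  show ?thesis
  proof (cases "a \<in> W")
    case True
    then show ?thesis using ab bnotS WS Sbad by blast
  next
    case False
    obtain w where w: "w \<in> W" using Wne by blast
    then have "rch G {a, b} w a" using WS ab(5) rch_sym unfolding side_def by blast
    then obtain c d where cd: "c \<in> W" "d \<notin> W" "rr (ied G - {{a, b}}) (iv G) c d"
      "(\<lambda>u v. rr (ied G - {{a, b}}) (iv G) u v \<and> u \<notin> W \<and> v \<notin> W)\<^sup>*\<^sup>* d a"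
      using exit_gen[of _ w a W] w False unfolding rch_def by blast
    have f: "{c, d} \<in> ied G" "{c, d} \<noteq> {a, b}" "c \<in> iv G" "d \<in> iv G" using cd(3) unfolding rr_def by auto
    have cdne: "c \<noteq> d" using cd(1,2) by blast
    have step1: "rr (ied G - {{c, d}}) (iv G) u v"
      if h: "rr (ied G - {{a, b}}) (iv G) u v \<and> u \<notin> W \<and> v \<notin> W" for u v
    proof -
      from h have uv: "{u, v} \<in> ied G" "u \<in> iv G" "v \<in> iv G" "u \<notin> W" "v \<notin> W"
        unfolding rr_def by auto
      have "{u, v} \<noteq> {c, d}"
      proof
        assume "{u, v} = {c, d}"
        then have "c \<in> {u, v}" by blast
        with cd(1) uv(4,5) show False by blast
      qed
      with uv show ?thesis unfolding rr_def by blast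
    qed
    have "rch G {c, d} d a"
      unfolding rch_def by (rule mono_rtranclp[rule_format, OF step1 cd(4)])
    then have ada: "a \<in> side G {c, d} d" using rch_sym unfolding side_def by blast
    have step2: "rr (ied G - {{c, d}}) (iv G) u v" if h: "rr (ied G) W u v" for u v
    proof -
      from h have uv: "{u, v} \<in> ied G" "u \<in> W" "v \<in> W"
        unfolding rr_def by auto
      have "{u, v} \<noteq> {c, d}"
      proof
        assume "{u, v} = {c, d}"
        then have "d \<in> {u, v}" by blast
        with cd(2) uv(2,3) show False by blast
      qed
      with uv WV show ?thesis unfolding rr_def by blast
    qed
    have WT: "W \<subseteq> side G {c, d} c"
    proof
      fix x assume x: "x \<in> W"
      have "(rr (ied G) W)\<^sup>*\<^sup>* c x" using Wc cd(1) x unfolding conn_on_rr by blast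
      then have "rch G {c, d} c x" unfolding rch_def using rtr_mono step2 by metis
      then show "x \<in> side G {c, d} c" unfolding side_def by simp
    qed
    have cS: "c \<in> side G {a, b} a" using cd(1) WS ab(5) by blast
    have dS: "d \<in> side G {a, b} a" using cS rch_edge_other[OF st f(1) f(2)] unfolding side_def
      using rch_trans by blast
    have n1: "side G {a, b} b \<subseteq> side G {c, d} a"
      using nest[OF st ab(1) ab(2) f(1) f(2)] cS dS by blast
    have sda: "side G {c, d} a = side G {c, d} d" using ada side_eq rch_sym unfolding side_def by blast
    have dj: "side G {c, d} c \<inter> side G {c, d} d = {}" using sides_disj[OF st f(1) cdne] .
    have TS: "side G {c, d} c \<subseteq> S"
    proof
      fix x assume x: "x \<in> side G {c, d} c"
      then have "x \<in> iv G" using side_sub[OF f(3)] by blast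
      then have "x \<in> side G {a, b} a \<or> x \<in> side G {a, b} b" using sides_cover[OF st ab(1)] by blast
      moreover have "x \<notin> side G {a, b} b" using x n1 sda dj by blast
      ultimately show "x \<in> S" using ab(5) by blast
    qed
    have anT: "a \<notin> side G {c, d} c" using ada dj by blast
    have Tbad: "bad n F G (side G {c, d} c)"
    proof -
      obtain A where A: "A \<in> F" "A \<inter> LL n G S = {}" using Sbad unfolding bad_def by blast
      have "LL n G (side G {c, d} c) \<subseteq> LL n G S" using TS unfolding LL_def by blast
      then have "A \<inter> LL n G (side G {c, d} c) = {}" using A by blast
      then show ?thesis using A eside_I[OF f(1)] unfolding bad_def by blast
    qed
    then have "side G {c, d} c \<in> X" using WT unfolding X_def by blast
    then have "S = side G {c, d} c" using S(2) TS by blast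
    then show ?thesis using anT ab(5) side_self by blast
  qed
qed



section \<open>Concrete small trees\<close>

definition valid :: "nat \<Rightarrow> nat set \<Rightarrow> bool" where
  "valid n B \<longleftrightarrow> B \<subseteq> {1..n} \<and> 2 \<le> card B \<and> 2 \<le> card ({1..n} - B)"

definition T2 :: "nat set \<Rightarrow> stree" where
  "T2 B = \<lparr>iv = {0, 1}, ied = {{0, 1}}, lf = (\<lambda>i. if i \<in> B then 0 else 1)\<rparr>"

definition T3 :: "nat set \<Rightarrow> nat set \<Rightarrow> stree" where
  "T3 A M = \<lparr>iv = {0, 1, 2}, ied = {{0, 1}, {1, 2}},
     lf = (\<lambda>i. if i \<in> A then 0 else if i \<in> M then 1 else 2)\<rparr>"

lemma no_cycle_small2: "\<not> has_cycle E {0::nat, 1}"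
proof
  assume "has_cycle E {0::nat, 1}"
  then obtain cs where cs: "3 \<le> length cs" "distinct cs" "set cs \<subseteq> {0::nat, 1}"
    unfolding has_cycle_def by blast
  have "length cs = card (set cs)" using cs(2) by (simp add: distinct_card)
  also have "\<dots> \<le> card {0::nat, 1}" using cs(3) by (intro card_mono) auto
  finally show False using cs(1) by simp
qed

lemma no_cycle_T3: "\<not> has_cycle {{0, 1}, {1, 2}} {0::nat, 1, 2}"
proof
  assume "has_cycle {{0, 1}, {1, 2}} {0::nat, 1, 2}"
  then obtain cs where cs: "3 \<le> length cs" "distinct cs" "set cs \<subseteq> {0::nat, 1, 2}"
    "\<forall>i < length cs. {cs ! i, cs ! ((i + 1) mod length cs)} \<in> {{0, 1}, {1, 2}}"
    unfolding has_cycle_def by blast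
  have "length cs = card (set cs)" using cs(2) by (simp add: distinct_card)
  also have "\<dots> \<le> card {0::nat, 1, 2}" using cs(3) by (intro card_mono) auto
  finally have l3: "length cs = 3" using cs(1) by simp
  have e: "{cs ! 0, cs ! 1} \<in> {{0, 1}, {1, 2}}" "{cs ! 1, cs ! 2} \<in> {{0, 1}, {1, 2}}"
     "{cs ! 2, cs ! 0} \<in> {{0, 1}, {1, 2}}"
    using cs(4)[rule_format, of 0] cs(4)[rule_format, of 1] cs(4)[rule_format, of 2] l3 by (simp_all add: numeral_2_eq_2)
  have d: "cs ! 0 \<noteq> cs ! 1" "cs ! 1 \<noteq> cs ! 2" "cs ! 0 \<noteq> cs ! 2"
    using cs(2) l3 by (auto simp: nth_eq_iff_index_eq)
  show False using e d by (auto simp: doubleton_eq_iff)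
qed

lemma ell_T2_0: "B \<subseteq> {1..n} \<Longrightarrow> ell n (T2 B) 0 = B"
  unfolding ell_def T2_def by auto

lemma ell_T2_1: "ell n (T2 B) 1 = {1..n} - B"
  unfolding ell_def T2_def by auto

lemma T2_stable:
  assumes v: "valid n B"
  shows "stable_tree n (T2 B)"
proof -
  have Bs: "B \<subseteq> {1..n}" "2 \<le> card B" "2 \<le> card ({1..n} - B)" using v unfolding valid_def by auto
  have nb0: "{u \<in> {0::nat, 1}. {u, 0} \<in> {{0, 1}}} = {1}" by (auto simp: doubleton_eq_iff)
  have nb1: "{u \<in> {0::nat, 1}. {u, 1} \<in> {{0, 1}}} = {0}" by (auto simp: doubleton_eq_iff)
  have conn: "conn_on {{0, 1}} {0::nat, 1}"
    unfolding conn_on_rr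
  proof (intro ballI)
    fix u w :: nat assume "u \<in> {0, 1}" "w \<in> {0, 1}"
    moreover have "rr {{0, 1}} {0, 1} 0 1" "rr {{0, 1}} {0, 1} 1 0"
      unfolding rr_def by (auto simp: insert_commute)
    ultimately show "(rr {{0, 1}} {0, 1})\<^sup>*\<^sup>* u w"
      by (metis rtranclp.rtrancl_refl r_into_rtranclp insertE empty_iff)
  qed
  show ?thesis
    unfolding stable_tree_def
  proof (intro conjI ballI)
    show "conn_on (ied (T2 B)) (iv (T2 B))" using conn unfolding T2_def by simp
    show "\<not> has_cycle (ied (T2 B)) (iv (T2 B))" using no_cycle_small2 unfolding T2_def by simp
    show "finite (iv (T2 B))" "iv (T2 B) \<noteq> {}" unfolding T2_def by auto
    have "{0::nat, 1} \<in> {e. \<exists>u v. e = {u, v} \<and> u \<noteq> v \<and> u \<in> {0, 1} \<and> v \<in> {0::nat, 1}}" by blast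
    then show "ied (T2 B) \<subseteq> {e. \<exists>u v. e = {u, v} \<and> u \<noteq> v \<and> u \<in> iv (T2 B) \<and> v \<in> iv (T2 B)}"
      unfolding T2_def by simp
  next
    fix i assume "i \<in> {1..n}"
    show "lf (T2 B) i \<in> iv (T2 B)" unfolding T2_def by simp
  next
    fix v assume "v \<in> iv (T2 B)"
    then have "v = 0 \<or> v = 1" unfolding T2_def by auto
    moreover have "ied (T2 B) = {{0, 1}}" "iv (T2 B) = {0, 1}" unfolding T2_def by simp_all
    have s0: "sdeg n (T2 B) 0 = 1 + card B"
      unfolding sdeg_def \<open>ied (T2 B) = {{0, 1}}\<close> \<open>iv (T2 B) = {0, 1}\<close> nb0 ell_T2_0[OF Bs(1)] by simp
    have s1: "sdeg n (T2 B) 1 = 1 + card ({1..n} - B)"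
      unfolding sdeg_def \<open>ied (T2 B) = {{0, 1}}\<close> \<open>iv (T2 B) = {0, 1}\<close> nb1 ell_T2_1 by simp
    show "3 \<le> sdeg n (T2 B) v" using \<open>v = 0 \<or> v = 1\<close> s0 s1 Bs by auto
  qed
qed

lemma ell_T3:
  assumes "A \<subseteq> {1..n}" "M \<subseteq> {1..n}" "A \<inter> M = {}"
  shows "ell n (T3 A M) 0 = A" "ell n (T3 A M) 1 = M" "ell n (T3 A M) 2 = {1..n} - A - M"
  using assms unfolding ell_def T3_def by auto

lemma T3_stable:
  assumes A: "A \<subseteq> {1..n}" and M: "M \<subseteq> {1..n}" and AM: "A \<inter> M = {}"
    and cA: "2 \<le> card A" and Mne: "M \<noteq> {}" and cR: "2 \<le> card ({1..n} - A - M)"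
  shows "stable_tree n (T3 A M)"
proof -
  have iv: "iv (T3 A M) = {0, 1, 2}" and ied: "ied (T3 A M) = {{0, 1}, {1, 2}}" unfolding T3_def by simp_all
  have nb0: "{u \<in> {0::nat, 1, 2}. {u, 0} \<in> {{0, 1}, {1, 2}}} = {1}" by (auto simp: doubleton_eq_iff)
  have nb1: "{u \<in> {0::nat, 1, 2}. {u, 1} \<in> {{0, 1}, {1, 2}}} = {0, 2}" by (auto simp: doubleton_eq_iff)
  have nb2: "{u \<in> {0::nat, 1, 2}. {u, 2} \<in> {{0, 1}, {1, 2}}} = {1}" by (auto simp: doubleton_eq_iff)
  have cM: "1 \<le> card M" using Mne M by (meson card_0_eq finite_atLeastAtMost finite_subset less_one not_le)
  have r: "rr {{0, 1}, {1, 2}} {0, 1, 2} 0 1" "rr {{0, 1}, {1, 2}} {0, 1, 2} 1 0"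
    "rr {{0, 1}, {1, 2}} {0, 1, 2} 1 2" "rr {{0, 1}, {1, 2}} {0, 1, 2} 2 1"
    unfolding rr_def by (auto simp: insert_commute)
  have to1: "(rr {{0, 1}, {1, 2}} {0::nat, 1, 2})\<^sup>*\<^sup>* u 1" if "u \<in> {0::nat, 1, 2}" for u
  proof -
    have "u = 0 \<or> u = 1 \<or> u = 2" using that by simp
    then show ?thesis using r by (elim disjE) (simp_all add: r_into_rtranclp)
  qed
  have from1: "(rr {{0, 1}, {1, 2}} {0::nat, 1, 2})\<^sup>*\<^sup>* 1 u" if "u \<in> {0::nat, 1, 2}" for u
  proof -
    have "u = 0 \<or> u = 1 \<or> u = 2" using that by simp
    then show ?thesis using r by (elim disjE) (simp_all add: r_into_rtranclp)
  qed
  have conn: "conn_on {{0, 1}, {1, 2}} {0::nat, 1, 2}"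
    unfolding conn_on_rr
  proof (intro ballI)
    fix u w :: nat assume "u \<in> {0, 1, 2}" "w \<in> {0, 1, 2}"
    then show "(rr {{0, 1}, {1, 2}} {0, 1, 2})\<^sup>*\<^sup>* u w"
      using to1 from1 rtranclp_trans[of "rr {{0, 1}, {1, 2}} {0::nat, 1, 2}" u 1 w] by blast
  qed
  show ?thesis
    unfolding stable_tree_def iv ied
  proof (intro conjI ballI)
    show "conn_on {{0, 1}, {1, 2}} {0::nat, 1, 2}" by (rule conn)
    show "\<not> has_cycle {{0, 1}, {1, 2}} {0::nat, 1, 2}" by (rule no_cycle_T3)
    show "finite {0::nat, 1, 2}" "{0::nat, 1, 2} \<noteq> {}" by auto
    have "{0::nat, 1} \<in> {e. \<exists>u v. e = {u, v} \<and> u \<noteq> v \<and> u \<in> {0, 1, 2} \<and> v \<in> {0::nat, 1, 2}}"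
      "{1::nat, 2} \<in> {e. \<exists>u v. e = {u, v} \<and> u \<noteq> v \<and> u \<in> {0, 1, 2} \<and> v \<in> {0::nat, 1, 2}}"
      by (rule CollectI, rule exI[of _ 0], rule exI[of _ 1], simp)
         (rule CollectI, rule exI[of _ 1], rule exI[of _ 2], simp)
    then show "{{0::nat, 1}, {1, 2}} \<subseteq> {e. \<exists>u v. e = {u, v} \<and> u \<noteq> v \<and> u \<in> {0, 1, 2} \<and> v \<in> {0::nat, 1, 2}}"
      by (simp only: insert_subset empty_subsetI)
  next
    fix i assume "i \<in> {1..n}"
    show "lf (T3 A M) i \<in> {0, 1, 2}" unfolding T3_def by simp
  next
    fix v assume v: "v \<in> {0::nat, 1, 2}"
    have s0: "sdeg n (T3 A M) 0 = 1 + card A"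
      unfolding sdeg_def iv ied nb0 ell_T3[OF A M AM] by simp
    have s1: "sdeg n (T3 A M) 1 = 2 + card M"
      unfolding sdeg_def iv ied nb1 ell_T3[OF A M AM] by simp
    have s2: "sdeg n (T3 A M) 2 = 1 + card ({1..n} - A - M)"
      unfolding sdeg_def iv ied nb2 ell_T3[OF A M AM] by simp
    show "3 \<le> sdeg n (T3 A M) v" using v s0 s1 s2 cA cM cR by auto
  qed
qed

lemma two_vertex_at:
  assumes st: "stable_tree n G" and c2: "card (iv G) = 2" and v: "v \<in> iv G"
  shows "\<exists>v'. v' \<noteq> v \<and> iv G = {v, v'} \<and> ied G = {{v, v'}} \<and> 2 \<le> card (ell n G v)
           \<and> ell n G v' = {1..n} - ell n G v"
proof -
  obtain p q where pq: "p \<noteq> q" "iv G = {p, q}" using c2 by (meson card_2_iff)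
  obtain v' where v': "v' \<noteq> v" "iv G = {v, v'}"
  proof (cases "v = p")
    case True then show ?thesis using that[of q] pq by simp
  next
    case False then have "v = q" using pq v by simp
    then show ?thesis using that[of p] pq by (simp add: insert_commute)
  qed
  have sub: "ied G \<subseteq> {{v, v'}}"
  proof
    fix e assume "e \<in> ied G"
    then obtain a b where ab: "e = {a, b}" "a \<noteq> b" "a \<in> iv G" "b \<in> iv G" using stable_edge[OF st] by blast
    then have "(a = v \<and> b = v') \<or> (a = v' \<and> b = v)" using v' by auto
    then show "e \<in> {{v, v'}}" using ab by (auto simp: insert_commute)
  qed
  have "(rr (ied G) (iv G))\<^sup>*\<^sup>* v v'" using st v' unfolding stable_tree_def conn_on_rr by blast
  then obtain y where "rr (ied G) (iv G) v y" using v'(1)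
    by (metis converse_rtranclpE)
  then have "ied G \<noteq> {}" unfolding rr_def by auto
  with sub have ied: "ied G = {{v, v'}}" by blast
  have nb: "{u \<in> iv G. {u, v} \<in> ied G} = {v'}"
  proof -
    have "{u \<in> {v, v'}. {u, v} \<in> {{v, v'}}} = {v'}" using v'(1) by (auto simp: doubleton_eq_iff)
    then show ?thesis using ied v'(2) by simp
  qed
  have "3 \<le> sdeg n G v" using st v unfolding stable_tree_def by blast
  then have c: "2 \<le> card (ell n G v)" unfolding sdeg_def nb by simp
  have "ell n G v' = {1..n} - ell n G v"
  proof -
    have "\<forall>i\<in>{1..n}. lf G i \<in> {v, v'}" using st v'(2) unfolding stable_tree_def by blast
    then show ?thesis unfolding ell_def using v'(1) by auto
  qed
  then show ?thesis using v' ied c by blast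
qed

lemma conn_on_single: "conn_on E {z}"
  unfolding conn_on_def by simp

lemma iso2:
  assumes stG: "stable_tree n G" and stH: "stable_tree n H" and cG: "card (iv G) = 2" and cH: "card (iv H) = 2"
    and v: "v \<in> iv G" and w: "w \<in> iv H" and eq: "ell n G v = ell n H w"
  shows "\<exists>\<pi>. collapse n G H \<pi> \<and> \<pi> v = w \<and> {x \<in> iv G. \<pi> x = w} = {v}"
proof -
  obtain v' where v': "v' \<noteq> v" "iv G = {v, v'}" "ied G = {{v, v'}}" "ell n G v' = {1..n} - ell n G v"
    using two_vertex_at[OF stG cG v] by blast
  obtain w' where w': "w' \<noteq> w" "iv H = {w, w'}" "ied H = {{w, w'}}" "ell n H w' = {1..n} - ell n H w"
    using two_vertex_at[OF stH cH w] by blast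
  define \<pi> where "\<pi> = (\<lambda>x. if x = v then w else w')"
  have pv: "\<pi> v = w" "\<pi> v' = w'" unfolding \<pi>_def using v'(1) by auto
  have fib: "{x \<in> iv G. \<pi> x = w} = {v}" using v' w'(1) pv by auto
  have fib': "{x \<in> iv G. \<pi> x = w'} = {v'}" using v' w'(1) pv by auto
  have img: "\<pi> ` iv G = iv H" using v'(2) w'(2) pv by auto
  have edges: "ied H = {{\<pi> u, \<pi> x} | u x. {u, x} \<in> ied G \<and> \<pi> u \<noteq> \<pi> x}"
  proof
    show "ied H \<subseteq> {{\<pi> u, \<pi> x} | u x. {u, x} \<in> ied G \<and> \<pi> u \<noteq> \<pi> x}"
      using w' v' pv by auto
    show "{{\<pi> u, \<pi> x} | u x. {u, x} \<in> ied G \<and> \<pi> u \<noteq> \<pi> x} \<subseteq> ied H"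
    proof
      fix e assume "e \<in> {{\<pi> u, \<pi> x} | u x. {u, x} \<in> ied G \<and> \<pi> u \<noteq> \<pi> x}"
      then obtain u x where ux: "e = {\<pi> u, \<pi> x}" "{u, x} = {v, v'}" by (auto simp: v'(3))
      then have "(u = v \<and> x = v') \<or> (u = v' \<and> x = v)" by (auto simp: doubleton_eq_iff)
      then show "e \<in> ied H" using ux pv w'(3) by (auto simp: insert_commute)
    qed
  qed
  have lfs: "\<forall>i\<in>{1..n}. lf H i = \<pi> (lf G i)"
  proof
    fix i assume i: "i \<in> {1..n}"
    have "lf G i \<in> {v, v'}" "lf H i \<in> {w, w'}" using stG stH i v'(2) w'(2) unfolding stable_tree_def by blast+
    show "lf H i = \<pi> (lf G i)"
    proof (cases "lf G i = v")
      case True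
      then have "i \<in> ell n H w" using eq i unfolding ell_def by auto
      then show ?thesis using True pv unfolding ell_def by simp
    next
      case False
      then have "lf G i = v'" using \<open>lf G i \<in> {v, v'}\<close> by simp
      then have "i \<in> ell n G v'" using i unfolding ell_def by simp
      then have "i \<notin> ell n H w" using v'(4) eq by simp
      then have "lf H i \<noteq> w" using i unfolding ell_def by simp
      then show ?thesis using \<open>lf G i = v'\<close> pv \<open>lf H i \<in> {w, w'}\<close> by simp
    qed
  qed
  have conn: "\<forall>y\<in>iv H. conn_on (ied G) {x \<in> iv G. \<pi> x = y}"
    using fib fib' w'(2) conn_on_single by auto
  have "collapse n G H \<pi>" unfolding collapse_def using stG stH img conn edges lfs by blast
  then show ?thesis using pv fib by blast
qed

lemma img_edges2:
  "{{\<pi> u, \<pi> x} | u x. {u, x} \<in> {{a, b}, {c, d}} \<and> \<pi> u \<noteq> \<pi> x} =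
    (if \<pi> a \<noteq> \<pi> b then {{\<pi> a, \<pi> b}} else {}) \<union> (if \<pi> c \<noteq> \<pi> d then {{\<pi> c, \<pi> d}} else {})"
  (is "?L = ?R")
proof
  show "?L \<subseteq> ?R"
  proof
    fix e assume "e \<in> ?L"
    then obtain u x where ux: "e = {\<pi> u, \<pi> x}" "{u, x} = {a, b} \<or> {u, x} = {c, d}" "\<pi> u \<noteq> \<pi> x" by blast
    from ux(2) have "(u = a \<and> x = b) \<or> (u = b \<and> x = a) \<or> (u = c \<and> x = d) \<or> (u = d \<and> x = c)"
      by (auto simp: doubleton_eq_iff)
    then show "e \<in> ?R" using ux(1,3) by (elim disjE) (auto simp: insert_commute)
  qed
  show "?R \<subseteq> ?L" by (auto split: if_splits)
qed

definition t3ok :: "nat \<Rightarrow> nat set \<Rightarrow> nat set \<Rightarrow> bool" where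
  "t3ok n A M \<longleftrightarrow> A \<subseteq> {1..n} \<and> M \<subseteq> {1..n} \<and> A \<inter> M = {} \<and> 2 \<le> card A \<and> M \<noteq> {}
      \<and> 2 \<le> card ({1..n} - A - M)"

lemma t3ok_stable: "t3ok n A M \<Longrightarrow> stable_tree n (T3 A M)"
  unfolding t3ok_def using T3_stable by blast

lemma conn01: "conn_on {{0, 1}, {1, 2}} {0::nat, 1}"
  unfolding conn_on_rr
proof (intro ballI)
  fix u w :: nat assume uw: "u \<in> {0, 1}" "w \<in> {0, 1}"
  have r: "rr {{0, 1}, {1, 2}} {0::nat, 1} 0 1" "rr {{0, 1}, {1, 2}} {0::nat, 1} 1 0"
    unfolding rr_def by (auto simp: insert_commute)
  show "(rr {{0, 1}, {1, 2}} {0, 1})\<^sup>*\<^sup>* u w"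
    using uw r by (elim insertE emptyE) (simp_all add: r_into_rtranclp)
qed

lemma conn12: "conn_on {{0, 1}, {1, 2}} {1::nat, 2}"
  unfolding conn_on_rr
proof (intro ballI)
  fix u w :: nat assume uw: "u \<in> {1, 2}" "w \<in> {1, 2}"
  have r: "rr {{0, 1}, {1, 2}} {1::nat, 2} 1 2" "rr {{0, 1}, {1, 2}} {1::nat, 2} 2 1"
    unfolding rr_def by (auto simp: insert_commute)
  show "(rr {{0, 1}, {1, 2}} {1, 2})\<^sup>*\<^sup>* u w"
    using uw r by (elim insertE emptyE) (simp_all add: r_into_rtranclp)
qed

lemma valid_card_diff:
  assumes "B \<subseteq> {1..n}" "2 \<le> card B" "2 \<le> card ({1..n} - B)"
  shows "valid n B"
  using assms unfolding valid_def by blast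

lemma t3_collapse1:
  assumes ok: "t3ok n A M"
  shows "collapse n (T3 A M) (T2 (A \<union> M)) (\<lambda>x. if x = 2 then 1 else 0)"
proof -
  define \<pi> :: "nat \<Rightarrow> nat" where "\<pi> = (\<lambda>x. if x = 2 then 1 else 0)"
  have A: "A \<subseteq> {1..n}" "M \<subseteq> {1..n}" "A \<inter> M = {}" "2 \<le> card A" "2 \<le> card ({1..n} - A - M)"
    using ok unfolding t3ok_def by auto
  have "card A \<le> card (A \<union> M)" using A by (intro card_mono) (auto intro: finite_subset)
  moreover have "{1..n} - (A \<union> M) = {1..n} - A - M" by blast
  ultimately have v: "valid n (A \<union> M)" using A unfolding valid_def by auto
  have f0: "{x \<in> {0::nat, 1, 2}. \<pi> x = 0} = {0, 1}" unfolding \<pi>_def by auto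
  have f1: "{x \<in> {0::nat, 1, 2}. \<pi> x = 1} = {2}" unfolding \<pi>_def by auto
  have "collapse n (T3 A M) (T2 (A \<union> M)) \<pi>"
    unfolding collapse_def
  proof (intro conjI ballI)
    show "stable_tree n (T3 A M)" using t3ok_stable[OF ok] .
    show "stable_tree n (T2 (A \<union> M))" using T2_stable[OF v] .
    show "\<pi> ` iv (T3 A M) = iv (T2 (A \<union> M))" unfolding T3_def T2_def \<pi>_def by auto
    have "\<pi> 0 = 0" "\<pi> 1 = 0" "\<pi> 2 = 1" unfolding \<pi>_def by simp_all
    then show "ied (T2 (A \<union> M)) = {{\<pi> u, \<pi> v} |u v. {u, v} \<in> ied (T3 A M) \<and> \<pi> u \<noteq> \<pi> v}"
      unfolding T3_def T2_def stree.select_convs img_edges2 by simp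
  next
    fix y assume "y \<in> iv (T2 (A \<union> M))"
    then have "y = 0 \<or> y = 1" unfolding T2_def by auto
    then show "conn_on (ied (T3 A M)) {v \<in> iv (T3 A M). \<pi> v = y}"
    proof
      assume "y = 0" then show ?thesis unfolding T3_def using f0 conn01 by simp
    next
      assume "y = 1" then show ?thesis unfolding T3_def using f1 conn_on_single by simp
    qed
  next
    fix i assume "i \<in> {1..n}"
    show "lf (T2 (A \<union> M)) i = \<pi> (lf (T3 A M) i)" unfolding T2_def T3_def \<pi>_def by simp
  qed
  then show ?thesis unfolding \<pi>_def .
qed

lemma t3_collapse2:
  assumes ok: "t3ok n A M"
  shows "collapse n (T3 A M) (T2 A) (\<lambda>x. if x = 0 then 0 else 1)"
proof -
  define \<pi> :: "nat \<Rightarrow> nat" where "\<pi> = (\<lambda>x. if x = 0 then 0 else 1)"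
  have A: "A \<subseteq> {1..n}" "M \<subseteq> {1..n}" "A \<inter> M = {}" "2 \<le> card A" "2 \<le> card ({1..n} - A - M)"
    using ok unfolding t3ok_def by auto
  have "card ({1..n} - A - M) \<le> card ({1..n} - A)" by (intro card_mono) auto
  then have v: "valid n A" using A unfolding valid_def by auto
  have f0: "{x \<in> {0::nat, 1, 2}. \<pi> x = 0} = {0}" unfolding \<pi>_def by auto
  have f1: "{x \<in> {0::nat, 1, 2}. \<pi> x = 1} = {1, 2}" unfolding \<pi>_def by auto
  have "collapse n (T3 A M) (T2 A) \<pi>"
    unfolding collapse_def
  proof (intro conjI ballI)
    show "stable_tree n (T3 A M)" using t3ok_stable[OF ok] .
    show "stable_tree n (T2 A)" using T2_stable[OF v] .
    show "\<pi> ` iv (T3 A M) = iv (T2 A)" unfolding T3_def T2_def \<pi>_def by auto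
    have "\<pi> 0 = 0" "\<pi> 1 = 1" "\<pi> 2 = 1" unfolding \<pi>_def by simp_all
    then show "ied (T2 A) = {{\<pi> u, \<pi> v} |u v. {u, v} \<in> ied (T3 A M) \<and> \<pi> u \<noteq> \<pi> v}"
      unfolding T3_def T2_def stree.select_convs img_edges2 by simp
  next
    fix y assume "y \<in> iv (T2 A)"
    then have "y = 0 \<or> y = 1" unfolding T2_def by auto
    then show "conn_on (ied (T3 A M)) {v \<in> iv (T3 A M). \<pi> v = y}"
    proof
      assume "y = 0" then show ?thesis unfolding T3_def using f0 conn12 conn_on_single by simp
    next
      assume "y = 1" then show ?thesis unfolding T3_def using f1 conn12 conn_on_single by simp
    qed
  next
    fix i assume "i \<in> {1..n}"
    show "lf (T2 A) i = \<pi> (lf (T3 A M) i)" unfolding T2_def T3_def \<pi>_def by simp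
  qed
  then show ?thesis unfolding \<pi>_def .
qed

lemma t3_collapse3:
  assumes ok: "t3ok n A M"
  shows "collapse n (T3 A M) (T2 ({1..n} - A)) (\<lambda>x. if x = 0 then 1 else 0)"
proof -
  define \<pi> :: "nat \<Rightarrow> nat" where "\<pi> = (\<lambda>x. if x = 0 then 1 else 0)"
  have A: "A \<subseteq> {1..n}" "M \<subseteq> {1..n}" "A \<inter> M = {}" "2 \<le> card A" "2 \<le> card ({1..n} - A - M)"
    using ok unfolding t3ok_def by auto
  have "card ({1..n} - A - M) \<le> card ({1..n} - A)" by (intro card_mono) auto
  moreover have "{1..n} - ({1..n} - A) = A" using A by blast
  ultimately have v: "valid n ({1..n} - A)" using A unfolding valid_def by auto
  have f0: "{x \<in> {0::nat, 1, 2}. \<pi> x = 0} = {1, 2}" unfolding \<pi>_def by auto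
  have f1: "{x \<in> {0::nat, 1, 2}. \<pi> x = 1} = {0}" unfolding \<pi>_def by auto
  have "collapse n (T3 A M) (T2 ({1..n} - A)) \<pi>"
    unfolding collapse_def
  proof (intro conjI ballI)
    show "stable_tree n (T3 A M)" using t3ok_stable[OF ok] .
    show "stable_tree n (T2 ({1..n} - A))" using T2_stable[OF v] .
    show "\<pi> ` iv (T3 A M) = iv (T2 ({1..n} - A))" unfolding T3_def T2_def \<pi>_def by auto
    have "\<pi> 0 = 1" "\<pi> 1 = 0" "\<pi> 2 = 0" unfolding \<pi>_def by simp_all
    then show "ied (T2 ({1..n} - A)) = {{\<pi> u, \<pi> v} |u v. {u, v} \<in> ied (T3 A M) \<and> \<pi> u \<noteq> \<pi> v}"
      unfolding T3_def T2_def stree.select_convs img_edges2 by (simp add: insert_commute)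
  next
    fix y assume "y \<in> iv (T2 ({1..n} - A))"
    then have "y = 0 \<or> y = 1" unfolding T2_def by auto
    then show "conn_on (ied (T3 A M)) {v \<in> iv (T3 A M). \<pi> v = y}"
    proof
      assume "y = 0" then show ?thesis unfolding T3_def using f0 conn12 conn_on_single by simp
    next
      assume "y = 1" then show ?thesis unfolding T3_def using f1 conn12 conn_on_single by simp
    qed
  next
    fix i assume "i \<in> {1..n}"
    then show "lf (T2 ({1..n} - A)) i = \<pi> (lf (T3 A M) i)" unfolding T2_def T3_def \<pi>_def by simp
  qed
  then show ?thesis unfolding \<pi>_def .
qed



lemma ext_fibre:
  assumes "extremal n Z" "collapse n G G' \<pi>" "v' \<in> iv G'"
  shows "v' \<in> Z G' \<longleftrightarrow> {v \<in> iv G. \<pi> v = v'} \<subseteq> Z G"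
  using assms unfolding extremal_def by blast

lemma ext_sub:
  assumes "extremal n Z" "stable_tree n G"
  shows "Z G \<subseteq> iv G" "Z G \<noteq> iv G"
  using assms unfolding extremal_def by blast+

lemma card_T2: "card (iv (T2 B)) = 2"
  unfolding T2_def by simp

lemma transfer:
  assumes Z: "extremal n Z" and stG: "stable_tree n G" and stH: "stable_tree n H"
    and cG: "card (iv G) = 2" and cH: "card (iv H) = 2"
    and v: "v \<in> iv G" and w: "w \<in> iv H" and eq: "ell n G v = ell n H w"
  shows "v \<in> Z G \<longleftrightarrow> w \<in> Z H"
proof -
  obtain \<pi> where p: "collapse n G H \<pi>" "\<pi> v = w" "{x \<in> iv G. \<pi> x = w} = {v}"
    using iso2[OF stG stH cG cH v w eq] by blast
  show ?thesis using ext_fibre[OF Z p(1) w] p(3) by simp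
qed

lemma valid_two_vertex:
  assumes st: "stable_tree n G" and c2: "card (iv G) = 2" and v: "v \<in> iv G"
  shows "valid n (ell n G v)"
proof -
  obtain v' where v': "v' \<noteq> v" "iv G = {v, v'}" "2 \<le> card (ell n G v)" "ell n G v' = {1..n} - ell n G v"
    using two_vertex_at[OF st c2 v] by blast
  have "v' \<in> iv G" using v' by simp
  then have "2 \<le> card (ell n G v')" using two_vertex_at[OF st c2] by blast
  moreover have "ell n G v \<subseteq> {1..n}" unfolding ell_def by blast
  ultimately show ?thesis unfolding valid_def using v'(3,4) by simp
qed

lemma CZ_char:
  assumes Z: "extremal n Z"
  shows "B \<in> CZ n Z \<longleftrightarrow> valid n B \<and> 0 \<in> Z (T2 B)"
proof
  assume "B \<in> CZ n Z"
  then obtain G v where Gv: "B = ell n G v" "stable_tree n G" "card (iv G) = 2" "v \<in> Z G"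
    unfolding CZ_def by blast
  have vG: "v \<in> iv G" using Gv ext_sub[OF Z Gv(2)] by blast
  have vB: "valid n B" using valid_two_vertex[OF Gv(2,3) vG] Gv(1) by simp
  then have B: "B \<subseteq> {1..n}" unfolding valid_def by blast
  have z0: "(0::nat) \<in> iv (T2 B)" by (simp add: T2_def)
  have "ell n G v = ell n (T2 B) 0" using ell_T2_0[OF B] Gv(1) by simp
  then have "0 \<in> Z (T2 B)"
    using transfer[OF Z Gv(2) T2_stable[OF vB] Gv(3) card_T2 vG z0] Gv(4) by blast
  then show "valid n B \<and> 0 \<in> Z (T2 B)" using vB by simp
next
  assume h: "valid n B \<and> 0 \<in> Z (T2 B)"
  then have B: "B \<subseteq> {1..n}" unfolding valid_def by simp
  show "B \<in> CZ n Z" unfolding CZ_def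
    using h T2_stable[of n B] card_T2[of B] ell_T2_0[OF B] by (metis (mono_tags, lifting) mem_Collect_eq)
qed

lemma iv_T2: "iv (T2 B) = {0, 1}" unfolding T2_def by simp
lemma iv_T3: "iv (T3 A M) = {0, 1, 2}" unfolding T3_def by simp

lemma P1:
  assumes Z: "extremal n Z" and v: "valid n B" and z0: "0 \<in> Z (T2 B)" and z1: "0 \<in> Z (T2 ({1..n} - B))"
  shows False
proof -
  have B: "B \<subseteq> {1..n}" using v unfolding valid_def by blast
  have "{1..n} - ({1..n} - B) = B" using B by blast
  then have v': "valid n ({1..n} - B)" using v unfolding valid_def by auto
  have e: "ell n (T2 ({1..n} - B)) 0 = ell n (T2 B) 1" using ell_T2_0[of "{1..n} - B" n] ell_T2_1[of n B] by simp
  have "1 \<in> Z (T2 B)"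
    using transfer[OF Z T2_stable[OF v'] T2_stable[OF v] card_T2 card_T2 _ _ e] z1 by (simp add: iv_T2)
  then have "iv (T2 B) \<subseteq> Z (T2 B)" using z0 by (simp add: iv_T2)
  then show False using ext_sub[OF Z T2_stable[OF v]] by blast
qed

lemma fib_c1: "{v \<in> iv (T3 A M). (if v = 2 then 1 else 0) = (0::nat)} = {0, 1}"
  unfolding T3_def by auto
lemma fib_c2: "{v \<in> iv (T3 A M). (if v = 0 then 0 else 1) = (0::nat)} = {0}"
  unfolding T3_def by auto
lemma fib_c3: "{v \<in> iv (T3 A M). (if v = 0 then 1 else 0) = (0::nat)} = {1, 2}"
  unfolding T3_def by auto

lemma Zc1: "extremal n Z \<Longrightarrow> t3ok n A M \<Longrightarrow> 0 \<in> Z (T2 (A \<union> M)) \<longleftrightarrow> {0, 1} \<subseteq> Z (T3 A M)"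
  using ext_fibre[OF _ t3_collapse1, of n Z A M 0] fib_c1 by (simp add: iv_T2)
lemma Zc2: "extremal n Z \<Longrightarrow> t3ok n A M \<Longrightarrow> 0 \<in> Z (T2 A) \<longleftrightarrow> 0 \<in> Z (T3 A M)"
  using ext_fibre[OF _ t3_collapse2, of n Z A M 0] fib_c2 by (simp add: iv_T2)
lemma Zc3: "extremal n Z \<Longrightarrow> t3ok n A M \<Longrightarrow> 0 \<in> Z (T2 ({1..n} - A)) \<longleftrightarrow> {1, 2} \<subseteq> Z (T3 A M)"
  using ext_fibre[OF _ t3_collapse3, of n Z A M 0] fib_c3 by (simp add: iv_T2)

lemma P2:
  assumes Z: "extremal n Z" and vA: "valid n A" and vB: "valid n B" and sub: "A \<subset> B" and z: "0 \<in> Z (T2 B)"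
  shows "0 \<in> Z (T2 A)"
proof -
  have A: "A \<subseteq> {1..n}" "2 \<le> card A" using vA unfolding valid_def by auto
  have B: "B \<subseteq> {1..n}" "2 \<le> card ({1..n} - B)" using vB unfolding valid_def by auto
  have r: "{1..n} - A - (B - A) = {1..n} - B" using sub by blast
  have ok: "t3ok n A (B - A)" unfolding t3ok_def using A B sub r by auto
  have u: "A \<union> (B - A) = B" using sub by blast
  have "{0, 1} \<subseteq> Z (T3 A (B - A))" using Zc1[OF Z ok] z u by simp
  then show ?thesis using Zc2[OF Z ok] by simp
qed

lemma P3:
  assumes Z: "extremal n Z" and v1: "valid n B1" and v2: "valid n B2"
    and z1: "0 \<in> Z (T2 B1)" and z2: "0 \<in> Z (T2 B2)" and cov: "B1 \<union> B2 = {1..n}"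
  shows False
proof (cases "B1 \<inter> B2 = {}")
  case True
  then have "B2 = {1..n} - B1" using cov by blast
  then show False using P1[OF Z v1 z1] z2 by simp
next
  case False
  define A where "A = {1..n} - B2"
  define M where "M = B1 \<inter> B2"
  have b1: "B1 \<subseteq> {1..n}" "2 \<le> card ({1..n} - B1)" using v1 unfolding valid_def by auto
  have b2: "B2 \<subseteq> {1..n}" "2 \<le> card ({1..n} - B2)" using v2 unfolding valid_def by auto
  have r: "{1..n} - A - M = {1..n} - B1" unfolding A_def M_def using cov by blast
  have ok: "t3ok n A M" unfolding t3ok_def using b1 b2 r False unfolding A_def M_def by auto
  have u1: "A \<union> M = B1" unfolding A_def M_def using cov b1 by blast
  have u2: "{1..n} - A = B2" unfolding A_def using b2 by blast
  have "{0, 1} \<subseteq> Z (T3 A M)" using Zc1[OF Z ok] z1 u1 by simp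
  moreover have "{1, 2} \<subseteq> Z (T3 A M)" using Zc3[OF Z ok] z2 u2 by simp
  ultimately have "iv (T3 A M) \<subseteq> Z (T3 A M)" by (auto simp: iv_T3)
  then show False using ext_sub[OF Z t3ok_stable[OF ok]] by blast
qed

lemma CZ_valid: "extremal n Z \<Longrightarrow> B \<in> CZ n Z \<Longrightarrow> valid n B"
  using CZ_char by blast

lemma hyp_into:
  assumes Z: "extremal n Z"
  shows "hyp_of n Z \<in> simple_intersecting_families n"
proof -
  have g1: "E \<subseteq> {1..n} \<and> 2 \<le> card E \<and> card E \<le> n - 2" if h: "E \<in> hyp_of n Z" for E
  proof -
    obtain B where B: "E = {1..n} - B" "B \<in> CZ n Z" using h unfolding hyp_of_def by blast
    have v: "valid n B" using CZ_valid[OF Z B(2)] .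
    then have b: "B \<subseteq> {1..n}" "2 \<le> card B" "2 \<le> card ({1..n} - B)" unfolding valid_def by auto
    have "card ({1..n} - B) = n - card B" using b(1) by (simp add: card_Diff_subset finite_subset)
    then show ?thesis using B(1) b by simp
  qed
  have g23: "(E1 \<subseteq> E2 \<longrightarrow> E1 = E2) \<and> E1 \<inter> E2 \<noteq> {}" if e1: "E1 \<in> hyp_of n Z" and e2: "E2 \<in> hyp_of n Z" for E1 E2
  proof -
    obtain B1 where B1: "E1 = {1..n} - B1" "B1 \<in> CZ n Z" "\<forall>B'\<in>CZ n Z. \<not> B1 \<subset> B'"
      using e1 unfolding hyp_of_def by blast
    obtain B2 where B2: "E2 = {1..n} - B2" "B2 \<in> CZ n Z" "\<forall>B'\<in>CZ n Z. \<not> B2 \<subset> B'"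
      using e2 unfolding hyp_of_def by blast
    have s1: "B1 \<subseteq> {1..n}" using CZ_valid[OF Z B1(2)] unfolding valid_def by blast
    have s2: "B2 \<subseteq> {1..n}" using CZ_valid[OF Z B2(2)] unfolding valid_def by blast
    have p1: "E1 \<subseteq> E2 \<longrightarrow> E1 = E2"
    proof
      assume "E1 \<subseteq> E2"
      then have "B2 \<subseteq> B1" using B1(1) B2(1) s1 s2 by blast
      then have "B2 = B1" using B2(3) B1(2) by blast
      then show "E1 = E2" using B1(1) B2(1) by simp
    qed
    have p2: "E1 \<inter> E2 \<noteq> {}"
    proof
      assume "E1 \<inter> E2 = {}"
      then have cov: "B1 \<union> B2 = {1..n}" using B1(1) B2(1) s1 s2 by blast
      have "valid n B1" "0 \<in> Z (T2 B1)" using CZ_char[OF Z] B1(2) by blast+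
      moreover have "valid n B2" "0 \<in> Z (T2 B2)" using CZ_char[OF Z] B2(2) by blast+
      ultimately show False using P3[OF Z _ _ _ _ cov] by blast
    qed
    show ?thesis using p1 p2 by blast
  qed
  show ?thesis unfolding simple_intersecting_families_def using g1 g23 by blast
qed

lemma CZ_down:
  assumes Z: "extremal n Z" and B': "B' \<in> CZ n Z" and B: "valid n B" and sub: "B \<subseteq> B'"
  shows "B \<in> CZ n Z"
proof (cases "B = B'")
  case True then show ?thesis using B' by simp
next
  case False
  then have "B \<subset> B'" using sub by blast
  moreover have "valid n B'" "0 \<in> Z (T2 B')" using CZ_char[OF Z] B' by blast+
  ultimately have "0 \<in> Z (T2 B)" using P2[OF Z B] by blast
  then show ?thesis using CZ_char[OF Z] B by blast
qed

lemma CZ_finite: "extremal n Z \<Longrightarrow> finite (CZ n Z)"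
proof -
  assume Z: "extremal n Z"
  have "CZ n Z \<subseteq> Pow {1..n}" using CZ_valid[OF Z] unfolding valid_def by blast
  then show ?thesis using finite_subset by blast
qed

lemma CZ_sub_hyp:
  assumes Z1: "extremal n Z1" and Z2: "extremal n Z2" and h: "hyp_of n Z1 = hyp_of n Z2"
  shows "CZ n Z1 \<subseteq> CZ n Z2"
proof
  fix B assume B: "B \<in> CZ n Z1"
  obtain B' where B': "B' \<in> CZ n Z1" "B \<subseteq> B'" "\<forall>C\<in>CZ n Z1. B' \<subseteq> C \<longrightarrow> B' = C"
    using finite_has_maximal2[OF CZ_finite[OF Z1] B] by blast
  have mx: "\<forall>C\<in>CZ n Z1. \<not> B' \<subset> C" using B'(3) by blast
  have "{1..n} - B' \<in> hyp_of n Z1" unfolding hyp_of_def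
    by (rule CollectI, rule exI[of _ B'], intro conjI refl B'(1) mx)
  then have "{1..n} - B' \<in> hyp_of n Z2" using h by simp
  then obtain B'' where B'': "{1..n} - B' = {1..n} - B''" "B'' \<in> CZ n Z2" unfolding hyp_of_def by blast
  have "B' \<subseteq> {1..n}" using CZ_valid[OF Z1 B'(1)] unfolding valid_def by blast
  moreover have "B'' \<subseteq> {1..n}" using CZ_valid[OF Z2 B''(2)] unfolding valid_def by blast
  ultimately have "B' = B''" using B''(1) by blast
  then show "B \<in> CZ n Z2" using CZ_down[OF Z2 B''(2) CZ_valid[OF Z1 B]] B'(2) by simp
qed

lemma inj_hyp: "inj_on (hyp_of n) (smooth_extremal_assignments n)"
proof (rule inj_onI)
  fix Z1 Z2 assume z1: "Z1 \<in> smooth_extremal_assignments n" and z2: "Z2 \<in> smooth_extremal_assignments n"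
    and h: "hyp_of n Z1 = hyp_of n Z2"
  have e1: "extremal n Z1" "smooth n Z1" "\<forall>G. \<not> stable_tree n G \<longrightarrow> Z1 G = {}"
    using z1 unfolding smooth_extremal_assignments_def by auto
  have e2: "extremal n Z2" "smooth n Z2" "\<forall>G. \<not> stable_tree n G \<longrightarrow> Z2 G = {}"
    using z2 unfolding smooth_extremal_assignments_def by auto
  have CZ: "CZ n Z1 = CZ n Z2" using CZ_sub_hyp[OF e1(1) e2(1) h] CZ_sub_hyp[OF e2(1) e1(1) h[symmetric]] by blast
  have dir: "Za G \<subseteq> Zb G"
    if a: "extremal n Za" "smooth n Za" and b: "extremal n Zb" and c: "CZ n Za = CZ n Zb"
      and st: "stable_tree n G" for Za Zb G
  proof
    fix v assume v: "v \<in> Za G"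
    then have vG: "v \<in> iv G" using ext_sub[OF a(1) st] by blast
    obtain G' \<pi> where g: "card (iv G') = 2" "collapse n G G' \<pi>" "\<pi> v \<in> Za G'"
      using a(2) st v unfolding smooth_def by blast
    have stG': "stable_tree n G'" using g(2) unfolding collapse_def by (elim conjE)
    have im: "\<pi> ` iv G = iv G'" using g(2) unfolding collapse_def by (elim conjE)
    have piv: "\<pi> v \<in> iv G'" using im vG by blast
    have "ell n G' (\<pi> v) \<in> CZ n Za" unfolding CZ_def
      by (rule CollectI, rule exI[of _ G'], rule exI[of _ "\<pi> v"]) (simp add: stG' g(1,3))
    then have "ell n G' (\<pi> v) \<in> CZ n Zb" using c by simp
    then obtain H w where H: "ell n G' (\<pi> v) = ell n H w" "stable_tree n H" "card (iv H) = 2" "w \<in> Zb H"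
      unfolding CZ_def by blast
    have wH: "w \<in> iv H" using H ext_sub[OF b H(2)] by blast
    have "\<pi> v \<in> Zb G'" using transfer[OF b H(2) stG' H(3) g(1) wH piv] H(1,4) by simp
    then have "{x \<in> iv G. \<pi> x = \<pi> v} \<subseteq> Zb G" using ext_fibre[OF b g(2) piv] by blast
    then show "v \<in> Zb G" using vG by blast
  qed
  show "Z1 = Z2"
  proof
    fix G
    show "Z1 G = Z2 G"
    proof (cases "stable_tree n G")
      case True
      then show ?thesis using dir[OF e1(1,2) e2(1) CZ True] dir[OF e2(1,2) e1(1) CZ[symmetric] True] by blast
    next
      case False
      then show ?thesis using e1(3) e2(3) by simp
    qed
  qed
qed



lemma col_st1: "collapse n G G' \<pi> \<Longrightarrow> stable_tree n G" unfolding collapse_def by (elim conjE)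
lemma col_st2: "collapse n G G' \<pi> \<Longrightarrow> stable_tree n G'" unfolding collapse_def by (elim conjE)
lemma col_img: "collapse n G G' \<pi> \<Longrightarrow> \<pi> ` iv G = iv G'" unfolding collapse_def by (elim conjE)
lemma col_conn: "collapse n G G' \<pi> \<Longrightarrow> v' \<in> iv G' \<Longrightarrow> conn_on (ied G) {v \<in> iv G. \<pi> v = v'}"
  unfolding collapse_def by (elim conjE) blast
lemma col_ied: "collapse n G G' \<pi> \<Longrightarrow> ied G' = {{\<pi> u, \<pi> v} | u v. {u, v} \<in> ied G \<and> \<pi> u \<noteq> \<pi> v}"
  unfolding collapse_def by (elim conjE)
lemma col_lf: "collapse n G G' \<pi> \<Longrightarrow> i \<in> {1..n} \<Longrightarrow> lf G' i = \<pi> (lf G i)"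
  unfolding collapse_def by (elim conjE) blast

lemma col_edge:
  assumes "collapse n G G' \<pi>" "{y, z} \<in> ied G" "\<pi> y \<noteq> \<pi> z"
  shows "{\<pi> y, \<pi> z} \<in> ied G'"
proof -
  have "{\<pi> y, \<pi> z} \<in> {{\<pi> u, \<pi> v} | u v. {u, v} \<in> ied G \<and> \<pi> u \<noteq> \<pi> v}"
    by (rule CollectI, rule exI[of _ y], rule exI[of _ z]) (simp add: assms(2,3))
  then show ?thesis using col_ied[OF assms(1)] by simp
qed

lemma pair_eq_cases: "{p, q} = {u, w} \<Longrightarrow> (p = u \<and> q = w) \<or> (p = w \<and> q = u)"
  by (auto simp: doubleton_eq_iff)

lemma fib_rch:
  assumes c: "collapse n G G' \<pi>" and e: "{u, w} \<in> ied G" and uw: "\<pi> u \<noteq> \<pi> w"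
    and x: "x \<in> iv G" and y: "y \<in> iv G" and xy: "\<pi> x = \<pi> y"
  shows "rch G {u, w} x y"
proof -
  define F where "F = {z \<in> iv G. \<pi> z = \<pi> x}"
  have "\<pi> x \<in> iv G'" using col_img[OF c] x by blast
  then have "conn_on (ied G) F" unfolding F_def using col_conn[OF c] by blast
  moreover have "x \<in> F" "y \<in> F" unfolding F_def using x y xy by auto
  ultimately have "(rr (ied G) F)\<^sup>*\<^sup>* x y" unfolding conn_on_rr by blast
  moreover have "rr (ied G - {{u, w}}) (iv G) p q" if h: "rr (ied G) F p q" for p q
  proof -
    have pq: "p \<in> F" "q \<in> F" "{p, q} \<in> ied G" using h unfolding rr_def by auto
    have "{p, q} \<noteq> {u, w}"
    proof
      assume "{p, q} = {u, w}"
      then have "(p = u \<and> q = w) \<or> (p = w \<and> q = u)" by (rule pair_eq_cases)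
      moreover have "\<pi> p = \<pi> q" using pq(1,2) unfolding F_def by simp
      ultimately show False using uw by auto
    qed
    then show ?thesis using pq unfolding rr_def F_def by auto
  qed
  ultimately show ?thesis unfolding rch_def using rtr_mono by metis
qed

lemma img_rch:
  assumes c: "collapse n G G' \<pi>" and e: "{u, w} \<in> ied G" and uw: "\<pi> u \<noteq> \<pi> w"
    and r: "rch G {u, w} x y"
  shows "rch G' {\<pi> u, \<pi> w} (\<pi> x) (\<pi> y)"
proof -
  have st: "stable_tree n G" using col_st1[OF c] .
  have st': "stable_tree n G'" using col_st2[OF c] .
  have uwV: "u \<in> iv G" "w \<in> iv G" using stable_edge[OF st e] by (auto simp: doubleton_eq_iff)
  have une: "u \<noteq> w" using uw by blast
  have "(rr (ied G - {{u, w}}) (iv G))\<^sup>*\<^sup>* x y" using r unfolding rch_def by simp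
  then show ?thesis
  proof (induction rule: rtranclp_induct)
    case base then show ?case by simp
  next
    case (step y z)
    have yz: "y \<in> iv G" "z \<in> iv G" "{y, z} \<in> ied G" "{y, z} \<noteq> {u, w}" using step(2) unfolding rr_def by auto
    have ryz: "rch G {u, w} y z" using rch_step yz by metis
    show ?case
    proof (cases "\<pi> y = \<pi> z")
      case True then show ?thesis using step(3) by simp
    next
      case False
      have ed: "{\<pi> y, \<pi> z} \<in> ied G'" using col_edge[OF c yz(3) False] .
      have pyz: "\<pi> y \<in> iv G'" "\<pi> z \<in> iv G'" using col_img[OF c] yz(1,2) by blast+
      have "{\<pi> y, \<pi> z} \<noteq> {\<pi> u, \<pi> w}"
      proof
        assume "{\<pi> y, \<pi> z} = {\<pi> u, \<pi> w}"
        then have "(\<pi> y = \<pi> u \<and> \<pi> z = \<pi> w) \<or> (\<pi> y = \<pi> w \<and> \<pi> z = \<pi> u)" by (rule pair_eq_cases)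
        then have "rch G {u, w} u w"
        proof
          assume h: "\<pi> y = \<pi> u \<and> \<pi> z = \<pi> w"
          have "rch G {u, w} u y" using fib_rch[OF c e uw uwV(1) yz(1)] h by simp
          moreover have "rch G {u, w} z w" using fib_rch[OF c e uw yz(2) uwV(2)] h by simp
          ultimately show ?thesis using ryz rch_trans by metis
        next
          assume h: "\<pi> y = \<pi> w \<and> \<pi> z = \<pi> u"
          have "rch G {u, w} u z" using fib_rch[OF c e uw uwV(1) yz(2)] h by simp
          moreover have "rch G {u, w} y w" using fib_rch[OF c e uw yz(1) uwV(2)] h by simp
          ultimately show ?thesis using ryz rch_trans rch_sym by metis
        qed
        then show False using bridge[OF st e une] by simp
      qed
      then have "rch G' {\<pi> u, \<pi> w} (\<pi> y) (\<pi> z)" using rch_step pyz ed by metis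
      then show ?thesis using step(3) rch_trans by metis
    qed
  qed
qed

lemma Zb_down:
  assumes c: "collapse n G G' \<pi>" and v': "v' \<in> iv G'" and S': "bad n F G' S'" "v' \<in> S'"
    and v: "v \<in> iv G" "\<pi> v = v'"
  shows "\<exists>S. bad n F G S \<and> v \<in> S"
proof -
  have st: "stable_tree n G" using col_st1[OF c] .
  have st': "stable_tree n G'" using col_st2[OF c] .
  obtain a' b' where ab': "{a', b'} \<in> ied G'" "a' \<noteq> b'" "S' = side G' {a', b'} a'"
    using eside_obtain[OF st'] S'(1) unfolding bad_def by metis
  obtain u0 w0 where uw0: "{a', b'} = {\<pi> u0, \<pi> w0}" "{u0, w0} \<in> ied G" "\<pi> u0 \<noteq> \<pi> w0"
    using ab'(1) col_ied[OF c] by blast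
  obtain u w where uw: "{u, w} \<in> ied G" "\<pi> u = a'" "\<pi> w = b'"
  proof -
    from pair_eq_cases[OF uw0(1)[symmetric]] show ?thesis
    proof
      assume "\<pi> u0 = a' \<and> \<pi> w0 = b'" then show ?thesis using that uw0(2) by blast
    next
      assume "\<pi> u0 = b' \<and> \<pi> w0 = a'" then show ?thesis using that[of w0 u0] uw0(2) by (simp add: insert_commute)
    qed
  qed
  have pne: "\<pi> u \<noteq> \<pi> w" using uw ab'(2) by simp
  have uV: "u \<in> iv G" using stable_edge[OF st uw(1)] by (auto simp: doubleton_eq_iff)
  have e'eq: "{\<pi> u, \<pi> w} = {a', b'}" using uw by simp
  have ra'v': "rch G' {a', b'} a' v'" using S'(2) ab'(3) unfolding side_def by simp
  have "rch G {u, w} v u"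
  proof -
    have "rch G {u, w} v u \<or> rch G {u, w} v w" using side_split[OF st v(1) uV] .
    moreover have "\<not> rch G {u, w} v w"
    proof
      assume "rch G {u, w} v w"
      then have "rch G' {a', b'} v' b'" using img_rch[OF c uw(1) pne] e'eq uw v(2) by metis
      then have "rch G' {a', b'} a' b'" using ra'v' rch_trans by metis
      then show False using bridge[OF st' ab'(1) ab'(2)] by simp
    qed
    ultimately show ?thesis by blast
  qed
  then have vS: "v \<in> side G {u, w} u" unfolding side_def using rch_sym by blast
  obtain A where A: "A \<in> F" "A \<inter> LL n G' S' = {}" using S'(1) unfolding bad_def by blast
  have "A \<inter> LL n G (side G {u, w} u) = {}"
  proof (rule ccontr)
    assume "A \<inter> LL n G (side G {u, w} u) \<noteq> {}"
    then obtain i where i: "i \<in> A" "i \<in> {1..n}" "lf G i \<in> side G {u, w} u" unfolding LL_def by blast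
    then have "rch G {u, w} u (lf G i)" unfolding side_def by simp
    then have "rch G' {a', b'} a' (lf G' i)" using img_rch[OF c uw(1) pne] e'eq uw(2) col_lf[OF c i(2)] by metis
    then have "i \<in> LL n G' S'" using i(2) ab'(3) unfolding LL_def side_def by simp
    then show False using A i(1) by blast
  qed
  then have "bad n F G (side G {u, w} u)" using A(1) eside_I[OF uw(1)] unfolding bad_def by blast
  then show ?thesis using vS by blast
qed

lemma Zb_up:
  assumes c: "collapse n G G' \<pi>" and inter: "\<forall>A\<in>F. \<forall>B\<in>F. A \<inter> B \<noteq> {}"
    and subs: "\<forall>A\<in>F. A \<subseteq> {1..n}" and v': "v' \<in> iv G'"
    and all: "\<forall>v\<in>iv G. \<pi> v = v' \<longrightarrow> (\<exists>S. bad n F G S \<and> v \<in> S)"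
  shows "\<exists>S'. bad n F G' S' \<and> v' \<in> S'"
proof -
  have st: "stable_tree n G" using col_st1[OF c] .
  have st': "stable_tree n G'" using col_st2[OF c] .
  define W where "W = {v \<in> iv G. \<pi> v = v'}"
  have WV: "W \<subseteq> iv G" unfolding W_def by blast
  have Wne: "W \<noteq> {}"
  proof -
    obtain x where "x \<in> iv G" "\<pi> x = v'" using v' col_img[OF c] by (metis imageE)
    then show ?thesis unfolding W_def by blast
  qed
  have Wc: "conn_on (ied G) W" using col_conn[OF c v'] unfolding W_def .
  have cov: "\<forall>w\<in>W. \<exists>S. bad n F G S \<and> w \<in> S" using all unfolding W_def by blast
  have "\<exists>S. bad n F G S \<and> W \<subseteq> S" using helly1[OF st inter subs WV Wne Wc cov] .
  then obtain a b where ab: "{a, b} \<in> ied G" "a \<noteq> b" "a \<in> W" "b \<notin> W" "W \<subseteq> side G {a, b} a"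
      "bad n F G (side G {a, b} a)"
    using helly2[OF st WV Wne Wc] by blast
  have bV: "b \<in> iv G" using stable_edge[OF st ab(1)] by (auto simp: doubleton_eq_iff)
  have pa: "\<pi> a = v'" using ab(3) unfolding W_def by simp
  have pb: "\<pi> b \<noteq> v'" using ab(4) bV unfolding W_def by simp
  have pne: "\<pi> a \<noteq> \<pi> b" using pa pb by simp
  have e': "{\<pi> a, \<pi> b} \<in> ied G'" using col_edge[OF c ab(1) pne] .
  obtain A where A: "A \<in> F" "A \<inter> LL n G (side G {a, b} a) = {}" using ab(6) unfolding bad_def by blast
  have "A \<inter> LL n G' (side G' {\<pi> a, \<pi> b} (\<pi> a)) = {}"
  proof (rule ccontr)
    assume "A \<inter> LL n G' (side G' {\<pi> a, \<pi> b} (\<pi> a)) \<noteq> {}"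
    then obtain i where i: "i \<in> A" "i \<in> {1..n}" "rch G' {\<pi> a, \<pi> b} (\<pi> a) (lf G' i)"
      unfolding LL_def side_def by blast
    have li: "lf G i \<in> iv G" using st i(2) unfolding stable_tree_def by blast
    have aV: "a \<in> iv G" using ab(3) WV by blast
    have "rch G {a, b} (lf G i) a \<or> rch G {a, b} (lf G i) b" using side_split[OF st li aV] .
    then show False
    proof
      assume "rch G {a, b} (lf G i) a"
      then have "i \<in> LL n G (side G {a, b} a)" using i(2) rch_sym unfolding LL_def side_def by blast
      then show False using A i(1) by blast
    next
      assume "rch G {a, b} (lf G i) b"
      then have "rch G' {\<pi> a, \<pi> b} (\<pi> (lf G i)) (\<pi> b)" using img_rch[OF c ab(1) pne] by blast
      then have "rch G' {\<pi> a, \<pi> b} (\<pi> a) (\<pi> b)" using i(3) col_lf[OF c i(2)] rch_trans by metis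
      then show False using bridge[OF st' e' pne] by simp
    qed
  qed
  then have "bad n F G' (side G' {\<pi> a, \<pi> b} (\<pi> a))" using A(1) eside_I[OF e'] unfolding bad_def by blast
  moreover have "v' \<in> side G' {\<pi> a, \<pi> b} (\<pi> a)" using pa side_self by metis
  ultimately show ?thesis by blast
qed

lemma side_conn:
  assumes x: "x \<in> iv G"
  shows "conn_on (ied G) (side G e x)"
proof -
  have p: "(rr (ied G) (side G e x))\<^sup>*\<^sup>* x y" if "rch G e x y" for y
  proof -
    have "(rr (ied G - {e}) (iv G))\<^sup>*\<^sup>* x y" using that unfolding rch_def by simp
    then show ?thesis
    proof (induction rule: rtranclp_induct)
      case base then show ?case by simp
    next
      case (step y z)
      have "rch G e x y" using step(1) unfolding rch_def by simp
      moreover have "rch G e x z" using step(1,2) unfolding rch_def by simp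
      ultimately have "rr (ied G) (side G e x) y z" using step(2) unfolding rr_def side_def by auto
      then show ?case using step(3) by simp
    qed
  qed
  show ?thesis unfolding conn_on_rr
  proof (intro ballI)
    fix u w assume "u \<in> side G e x" "w \<in> side G e x"
    then have "(rr (ied G) (side G e x))\<^sup>*\<^sup>* x u" "(rr (ied G) (side G e x))\<^sup>*\<^sup>* x w"
      using p unfolding side_def by auto
    then show "(rr (ied G) (side G e x))\<^sup>*\<^sup>* u w" using rtr_sym by (metis rtranclp_trans)
  qed
qed

lemma LL_split:
  assumes st: "stable_tree n G" and e: "{a, b} \<in> ied G" and ab: "a \<noteq> b"
  shows "{1..n} - LL n G (side G {a, b} a) = LL n G (side G {a, b} b)"
proof -
  have "\<forall>i\<in>{1..n}. lf G i \<in> iv G" using st unfolding stable_tree_def by blast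
  then show ?thesis using sides_cover[OF st e] sides_disj[OF st e ab] unfolding LL_def by blast
qed

lemma edge_collapse:
  assumes st: "stable_tree n G" and e: "{a, b} \<in> ied G" and ab: "a \<noteq> b"
  shows "collapse n G (T2 (LL n G (side G {a, b} a))) (\<lambda>x. if x \<in> side G {a, b} a then 0 else 1)"
proof -
  define S where "S = side G {a, b} a"
  define B where "B = LL n G S"
  define \<pi> :: "nat \<Rightarrow> nat" where "\<pi> = (\<lambda>x. if x \<in> S then 0 else 1)"
  have abV: "a \<in> iv G" "b \<in> iv G" using stable_edge[OF st e] by (auto simp: doubleton_eq_iff)
  have e': "{b, a} \<in> ied G" using e by (simp add: insert_commute)
  have c1: "2 \<le> card B" unfolding B_def S_def using leaf_card[OF st e ab] .
  have c2: "2 \<le> card (LL n G (side G {a, b} b))" using leaf_card[OF st e' ab[symmetric]] by (simp add: insert_commute)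
  have sp: "{1..n} - B = LL n G (side G {a, b} b)" unfolding B_def S_def using LL_split[OF st e ab] .
  have Bsub: "B \<subseteq> {1..n}" unfolding B_def LL_def by blast
  have v: "valid n B" unfolding valid_def using c1 c2 sp Bsub by simp
  have aS: "a \<in> S" unfolding S_def using side_self by metis
  have bS: "b \<notin> S" unfolding S_def using sides_disj[OF st e ab] side_self by blast
  have SV: "S \<subseteq> iv G" unfolding S_def using side_sub[OF abV(1)] .
  have f0: "{x \<in> iv G. \<pi> x = 0} = S" unfolding \<pi>_def using SV by auto
  have f1: "{x \<in> iv G. \<pi> x = 1} = side G {a, b} b"
    unfolding \<pi>_def S_def using sides_cover[OF st e] sides_disj[OF st e ab] by auto
  have "collapse n G (T2 B) \<pi>"
    unfolding collapse_def
  proof (intro conjI ballI)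
    show "stable_tree n G" by (rule st)
    show "stable_tree n (T2 B)" using T2_stable[OF v] .
    show "\<pi> ` iv G = iv (T2 B)"
    proof
      show "\<pi> ` iv G \<subseteq> iv (T2 B)" unfolding \<pi>_def iv_T2 by auto
      have "\<pi> a = 0" "\<pi> b = 1" unfolding \<pi>_def using aS bS by auto
      then show "iv (T2 B) \<subseteq> \<pi> ` iv G" unfolding iv_T2 using abV by (metis empty_subsetI image_eqI insert_subset)
    qed
    show "ied (T2 B) = {{\<pi> u, \<pi> v} |u v. {u, v} \<in> ied G \<and> \<pi> u \<noteq> \<pi> v}"
    proof
      have "\<pi> a = 0" "\<pi> b = 1" unfolding \<pi>_def using aS bS by auto
      then have "{\<pi> a, \<pi> b} \<in> {{\<pi> u, \<pi> v} |u v. {u, v} \<in> ied G \<and> \<pi> u \<noteq> \<pi> v}"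
        by (intro CollectI exI[of _ a] exI[of _ b]) (simp add: e)
      then show "ied (T2 B) \<subseteq> {{\<pi> u, \<pi> v} |u v. {u, v} \<in> ied G \<and> \<pi> u \<noteq> \<pi> v}"
        using \<open>\<pi> a = 0\<close> \<open>\<pi> b = 1\<close> unfolding T2_def by simp
      show "{{\<pi> u, \<pi> v} |u v. {u, v} \<in> ied G \<and> \<pi> u \<noteq> \<pi> v} \<subseteq> ied (T2 B)"
      proof
        fix x assume "x \<in> {{\<pi> u, \<pi> v} |u v. {u, v} \<in> ied G \<and> \<pi> u \<noteq> \<pi> v}"
        then obtain u v where uv: "x = {\<pi> u, \<pi> v}" "\<pi> u \<noteq> \<pi> v" by blast
        have "\<pi> u \<in> {0, 1}" "\<pi> v \<in> {0, 1}" unfolding \<pi>_def by auto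
        then have "x = {0, 1}" using uv by (auto simp: insert_commute)
        then show "x \<in> ied (T2 B)" unfolding T2_def by simp
      qed
    qed
  next
    fix y assume "y \<in> iv (T2 B)"
    then have "y = 0 \<or> y = 1" unfolding iv_T2 by simp
    then show "conn_on (ied G) {v \<in> iv G. \<pi> v = y}"
    proof
      assume "y = 0" then show ?thesis using f0 side_conn[OF abV(1)] unfolding S_def by simp
    next
      assume "y = 1" then show ?thesis using f1 side_conn[OF abV(2)] by simp
    qed
  next
    fix i assume i: "i \<in> {1..n}"
    show "lf (T2 B) i = \<pi> (lf G i)" unfolding T2_def \<pi>_def B_def LL_def using i by simp
  qed
  then show ?thesis unfolding \<pi>_def B_def S_def .
qed



definition ZF :: "nat \<Rightarrow> nat set set \<Rightarrow> stree \<Rightarrow> nat set" where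
  "ZF n F G = (if stable_tree n G then {v \<in> iv G. \<exists>S. bad n F G S \<and> v \<in> S} else {})"

lemma ZF_extremal:
  assumes inter: "\<forall>A\<in>F. \<forall>B\<in>F. A \<inter> B \<noteq> {}" and subs: "\<forall>A\<in>F. A \<subseteq> {1..n}"
  shows "extremal n (ZF n F)"
  unfolding extremal_def
proof (intro conjI allI impI ballI)
  fix G assume st: "stable_tree n G"
  show "ZF n F G \<subseteq> iv G" unfolding ZF_def using st by auto
  show "ZF n F G \<noteq> iv G"
  proof
    assume h: "ZF n F G = iv G"
    have WV: "iv G \<subseteq> iv G" by simp
    have ne: "iv G \<noteq> {}" and cn: "conn_on (ied G) (iv G)" using st unfolding stable_tree_def by auto
    have cov: "\<forall>w\<in>iv G. \<exists>S. bad n F G S \<and> w \<in> S" using h st unfolding ZF_def by auto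
    obtain S where S: "bad n F G S" "iv G \<subseteq> S" using helly1[OF st inter subs WV ne cn cov] by blast
    obtain a b where ab: "{a, b} \<in> ied G" "a \<noteq> b" "a \<in> iv G" "b \<in> iv G" "S = side G {a, b} a"
      using eside_obtain[OF st] S(1) unfolding bad_def by metis
    have "b \<notin> S" using sides_disj[OF st ab(1,2)] ab(5) side_self by blast
    then show False using S(2) ab(4) by blast
  qed
next
  fix G G' \<pi> v'
  assume c: "collapse n G G' \<pi>" and v': "v' \<in> iv G'"
  have st: "stable_tree n G" using col_st1[OF c] .
  have st': "stable_tree n G'" using col_st2[OF c] .
  show "v' \<in> ZF n F G' \<longleftrightarrow> {v \<in> iv G. \<pi> v = v'} \<subseteq> ZF n F G"
  proof
    assume "v' \<in> ZF n F G'"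
    then obtain S' where S': "bad n F G' S'" "v' \<in> S'" using st' unfolding ZF_def by auto
    show "{v \<in> iv G. \<pi> v = v'} \<subseteq> ZF n F G"
    proof
      fix v assume "v \<in> {v \<in> iv G. \<pi> v = v'}"
      then have v: "v \<in> iv G" "\<pi> v = v'" by auto
      show "v \<in> ZF n F G" using Zb_down[OF c v' S' v] st v(1) unfolding ZF_def by simp
    qed
  next
    assume h: "{v \<in> iv G. \<pi> v = v'} \<subseteq> ZF n F G"
    have "\<forall>v\<in>iv G. \<pi> v = v' \<longrightarrow> (\<exists>S. bad n F G S \<and> v \<in> S)" using h st unfolding ZF_def by auto
    then obtain S' where "bad n F G' S'" "v' \<in> S'" using Zb_up[OF c inter subs v'] by blast
    then show "v' \<in> ZF n F G'" using st' v' unfolding ZF_def by auto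
  qed
qed

lemma rr_empty: "(rr {} S)\<^sup>*\<^sup>* x y \<Longrightarrow> x = y"
  by (induction rule: rtranclp_induct) (auto simp: rr_def)

lemma side_single:
  assumes "ied G = {e}"
  shows "side G e x = {x}"
proof -
  have em: "ied G - {e} = {}" using assms by simp
  have "rch G e x y \<longleftrightarrow> x = y" for y
  proof
    assume "rch G e x y"
    then have "(rr {} (iv G))\<^sup>*\<^sup>* x y" unfolding rch_def em .
    then show "x = y" by (rule rr_empty)
  qed simp
  then show ?thesis unfolding side_def by auto
qed

lemma LL_single: "LL n G {v} = ell n G v"
  unfolding LL_def ell_def by auto

lemma ZF_smooth:
  assumes inter: "\<forall>A\<in>F. \<forall>B\<in>F. A \<inter> B \<noteq> {}" and subs: "\<forall>A\<in>F. A \<subseteq> {1..n}"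
  shows "smooth n (ZF n F)"
  unfolding smooth_def
proof (intro allI impI ballI)
  fix G v assume st: "stable_tree n G" and v: "v \<in> ZF n F G"
  then obtain S where S: "bad n F G S" "v \<in> S" unfolding ZF_def by auto
  obtain a b where ab: "{a, b} \<in> ied G" "a \<noteq> b" "a \<in> iv G" "b \<in> iv G" "S = side G {a, b} a"
    using eside_obtain[OF st] S(1) unfolding bad_def by metis
  define B where "B = LL n G S"
  define \<pi> :: "nat \<Rightarrow> nat" where "\<pi> = (\<lambda>x. if x \<in> side G {a, b} a then 0 else 1)"
  have c: "collapse n G (T2 B) \<pi>" unfolding \<pi>_def B_def ab(5) using edge_collapse[OF st ab(1,2)] .
  have stT: "stable_tree n (T2 B)" using col_st2[OF c] .
  have pv: "\<pi> v = 0" unfolding \<pi>_def using S(2) ab(5) by simp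
  have Bs: "B \<subseteq> {1..n}" unfolding B_def LL_def by blast
  have sT: "side (T2 B) {0, 1} 0 = {0}" using side_single[of "T2 B" "{0, 1}"] unfolding T2_def by simp
  have "LL n (T2 B) {0} = B" using LL_single ell_T2_0[OF Bs] by metis
  moreover obtain A where "A \<in> F" "A \<inter> LL n G S = {}" using S(1) unfolding bad_def by blast
  moreover have "eside (T2 B) {0}" using eside_I[of 0 1 "T2 B"] sT unfolding T2_def by simp
  ultimately have "bad n F (T2 B) {0}" unfolding bad_def B_def by auto
  then have "0 \<in> ZF n F (T2 B)" using stT unfolding ZF_def by (auto simp: iv_T2)
  then show "\<exists>G' \<pi>. card (iv G') = 2 \<and> collapse n G G' \<pi> \<and> \<pi> v \<in> ZF n F G'"
    using c pv card_T2 by metis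
qed

lemma ZF_2vertex:
  assumes st: "stable_tree n G" and c2: "card (iv G) = 2" and v: "v \<in> iv G"
  shows "v \<in> ZF n F G \<longleftrightarrow> (\<exists>A\<in>F. A \<inter> ell n G v = {})"
proof -
  obtain v' where v': "v' \<noteq> v" "iv G = {v, v'}" "ied G = {{v, v'}}"
    using two_vertex_at[OF st c2 v] by blast
  show ?thesis
  proof
    assume "v \<in> ZF n F G"
    then obtain S where S: "bad n F G S" "v \<in> S" using st unfolding ZF_def by auto
    obtain a b where ab: "{a, b} \<in> ied G" "S = side G {a, b} a"
      using eside_obtain[OF st] S(1) unfolding bad_def by metis
    have "ied G = {{a, b}}" using ab(1) v'(3) by simp
    then have "S = {a}" using ab(2) side_single by metis
    then have "S = {v}" using S(2) by simp
    then show "\<exists>A\<in>F. A \<inter> ell n G v = {}" using S(1) LL_single unfolding bad_def by metis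
  next
    assume "\<exists>A\<in>F. A \<inter> ell n G v = {}"
    moreover have "side G {v, v'} v = {v}" using side_single[OF v'(3)] .
    moreover have "eside G (side G {v, v'} v)" using eside_I v'(3) by simp
    ultimately have "bad n F G {v}" unfolding bad_def using LL_single by metis
    then show "v \<in> ZF n F G" using st v unfolding ZF_def by auto
  qed
qed

lemma ZF_SEA:
  assumes inter: "\<forall>A\<in>F. \<forall>B\<in>F. A \<inter> B \<noteq> {}" and subs: "\<forall>A\<in>F. A \<subseteq> {1..n}"
  shows "ZF n F \<in> smooth_extremal_assignments n"
  unfolding smooth_extremal_assignments_def
  using ZF_extremal[OF inter subs] ZF_smooth[OF inter subs] unfolding ZF_def by auto

lemma CZ_ZF:
  assumes inter: "\<forall>A\<in>F. \<forall>B\<in>F. A \<inter> B \<noteq> {}" and subs: "\<forall>A\<in>F. A \<subseteq> {1..n}"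
  shows "CZ n (ZF n F) = {B. valid n B \<and> (\<exists>A\<in>F. A \<inter> B = {})}"
proof
  show "CZ n (ZF n F) \<subseteq> {B. valid n B \<and> (\<exists>A\<in>F. A \<inter> B = {})}"
  proof
    fix B assume "B \<in> CZ n (ZF n F)"
    then obtain G v where Gv: "B = ell n G v" "stable_tree n G" "card (iv G) = 2" "v \<in> ZF n F G"
      unfolding CZ_def by blast
    have vG: "v \<in> iv G" using Gv(4) unfolding ZF_def by (auto split: if_splits)
    have "valid n B" using valid_two_vertex[OF Gv(2,3) vG] Gv(1) by simp
    moreover have "\<exists>A\<in>F. A \<inter> B = {}" using ZF_2vertex[OF Gv(2,3) vG] Gv(1,4) by simp
    ultimately show "B \<in> {B. valid n B \<and> (\<exists>A\<in>F. A \<inter> B = {})}" by simp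
  qed
  show "{B. valid n B \<and> (\<exists>A\<in>F. A \<inter> B = {})} \<subseteq> CZ n (ZF n F)"
  proof
    fix B assume "B \<in> {B. valid n B \<and> (\<exists>A\<in>F. A \<inter> B = {})}"
    then have B: "valid n B" "\<exists>A\<in>F. A \<inter> B = {}" by auto
    have Bs: "B \<subseteq> {1..n}" using B(1) unfolding valid_def by blast
    have st: "stable_tree n (T2 B)" using T2_stable[OF B(1)] .
    have z: "(0::nat) \<in> iv (T2 B)" by (simp add: iv_T2)
    have "0 \<in> ZF n F (T2 B)" using ZF_2vertex[OF st card_T2 z] B(2) ell_T2_0[OF Bs] by simp
    then show "B \<in> CZ n (ZF n F)" unfolding CZ_def
      by (rule_tac CollectI, rule_tac exI[of _ "T2 B"], rule_tac exI[of _ 0])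
         (simp add: st card_T2 ell_T2_0[OF Bs])
  qed
qed

lemma hyp_ZF:
  assumes F: "F \<in> simple_intersecting_families n"
  shows "hyp_of n (ZF n F) = F"
proof -
  have Fc: "\<forall>A\<in>F. A \<subseteq> {1..n} \<and> 2 \<le> card A \<and> card A \<le> n - 2"
    and Fa: "\<forall>A\<in>F. \<forall>B\<in>F. A \<subseteq> B \<longrightarrow> A = B"
    and inter: "\<forall>A\<in>F. \<forall>B\<in>F. A \<inter> B \<noteq> {}"
    using F unfolding simple_intersecting_families_def by auto
  have subs: "\<forall>A\<in>F. A \<subseteq> {1..n}" using Fc by blast
  define C where "C = {B. valid n B \<and> (\<exists>A\<in>F. A \<inter> B = {})}"
  have CZ: "CZ n (ZF n F) = C" unfolding C_def using CZ_ZF[OF inter subs] .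
  have compl: "valid n ({1..n} - A)" if A: "A \<in> F" for A
  proof -
    have a: "A \<subseteq> {1..n}" "2 \<le> card A" "card A \<le> n - 2" using Fc A by auto
    have "card ({1..n} - A) = n - card A" using a(1) by (simp add: card_Diff_subset finite_subset)
    moreover have "{1..n} - ({1..n} - A) = A" using a(1) by blast
    ultimately show ?thesis unfolding valid_def using a by auto
  qed
  have inC: "{1..n} - A \<in> C" if A: "A \<in> F" for A
    unfolding C_def using compl[OF A] A by blast
  show ?thesis
  proof
    show "hyp_of n (ZF n F) \<subseteq> F"
    proof
      fix E assume "E \<in> hyp_of n (ZF n F)"
      then obtain B where B: "E = {1..n} - B" "B \<in> C" "\<forall>B'\<in>C. \<not> B \<subset> B'"
        unfolding hyp_of_def CZ by blast
      obtain A where A: "A \<in> F" "A \<inter> B = {}" "valid n B" using B(2) unfolding C_def by blast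
      have Bs: "B \<subseteq> {1..n}" using A(3) unfolding valid_def by blast
      have "B \<subseteq> {1..n} - A" using Bs A(2) by blast
      then have "B = {1..n} - A" using B(3) inC[OF A(1)] by blast
      then have "E = A" using B(1) subs A(1) by blast
      then show "E \<in> F" using A(1) by simp
    qed
    show "F \<subseteq> hyp_of n (ZF n F)"
    proof
      fix A assume A: "A \<in> F"
      have mx: "\<forall>B'\<in>C. \<not> ({1..n} - A) \<subset> B'"
      proof (intro ballI notI)
        fix B' assume B': "B' \<in> C" "{1..n} - A \<subset> B'"
        obtain A' where A': "A' \<in> F" "A' \<inter> B' = {}" "valid n B'" using B'(1) unfolding C_def by blast
        have B's: "B' \<subseteq> {1..n}" using A'(3) unfolding valid_def by blast
        have "A' \<subseteq> A" using A' B'(2) subs by blast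
        then have "A' = A" using Fa A'(1) A by blast
        moreover have "A \<inter> B' \<noteq> {}" using B'(2) B's by blast
        ultimately show False using A'(2) by simp
      qed
      have eqA: "A = {1..n} - ({1..n} - A)" using subs A by blast
      show "A \<in> hyp_of n (ZF n F)" unfolding hyp_of_def CZ
        by (rule CollectI, rule exI[of _ "{1..n} - A"], intro conjI eqA inC[OF A] mx)
    qed
  qed
qed

theorem theorem7p9:
  fixes n :: nat
  shows "bij_betw (hyp_of n) (smooth_extremal_assignments n) (simple_intersecting_families n)"
  unfolding bij_betw_def
proof
  show "inj_on (hyp_of n) (smooth_extremal_assignments n)" by (rule inj_hyp)
  show "hyp_of n ` smooth_extremal_assignments n = simple_intersecting_families n"
  proof
    show "hyp_of n ` smooth_extremal_assignments n \<subseteq> simple_intersecting_families n"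
      using hyp_into unfolding smooth_extremal_assignments_def by blast
    show "simple_intersecting_families n \<subseteq> hyp_of n ` smooth_extremal_assignments n"
    proof
      fix F assume F: "F \<in> simple_intersecting_families n"
      have inter: "\<forall>A\<in>F. \<forall>B\<in>F. A \<inter> B \<noteq> {}" and subs: "\<forall>A\<in>F. A \<subseteq> {1..n}"
        using F unfolding simple_intersecting_families_def by auto
      show "F \<in> hyp_of n ` smooth_extremal_assignments n"
        using hyp_ZF[OF F] ZF_SEA[OF inter subs] by (metis image_eqI)
    qed
  qed
qed

end
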